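(* Let $s>0$ and $0<\epsilon<\min\{s,1\}$, and let $\rho,\lambda\in(1,\infty)$, $\sigma\in(1/2,1)$ be chosen such that $1-\sigma=\frac{1}{\rho}+\frac{1}{\lambda}$, $\rho(2\sigma-1-\epsilon)>1$ and $\lambda\le 2/(1-s)^+$. Define, for any $r$, the norm $\|u\|_{\mathcal{H}^r}:=\|u\|_{H^r}+\|\hat{u}\|_{L^\lambda(-1,1)}$. For the Korteweg–de Vries equation $u_t+u_{xxx}\pm(u^2)_x=0$ on $\mathbb{R}$, with phase $\Phi(\xi,\xi_1,\xi_2)=3\xi\xi_1\xi_2$ and symbol $m=\xi$, consider the bilinear operator $$\mathcal{F}[T_\sigma(u_1,u_2)](\xi)=\int_{\xi_1+\xi_2=\xi}\frac{\xi}{\langle\Phi\rangle^{\sigma}}\hat{u}_1(\xi_1)\hat{u}_2(\xi_2)\,d\xi_1,$$ where $\langle\Phi\rangle=(1+\Phi^2)^{1/2}$. Then for any $u_1,u_2\in\mathcal{H}^s$, $$\|T_\sigma(u_1,u_2)\|_{\mathcal{H}^{s+\epsilon}}\lesssim \|u_1\|_{\mathcal{H}^s}\|u_2\|_{\mathcal{H}^s}.$$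
   Context: This is used to prove nonlinear smoothing for KdV on $H^s(\mathbb{R})\cap L^2(|x|^{s/2}dx)$ of any order $\epsilon<\min\{s,1\}$, $s>0$. The auxiliary norm $\mathcal{H}^s$ (with the $L^\lambda(-1,1)$ control of the Fourier transform at low frequencies) is introduced because the plain $H^s$ norm is not enough; for data in $H^s\cap L^2(|x|^{s/2}dx)$ the profile's Fourier transform lies in $H^{s/2}\hookrightarrow L^\lambda$. *)

theory Defs
  imports "HOL-Analysis.Analysis"
begin

(* Functions are represented on the Fourier side: f = \<hat>u :: real \<Rightarrow> complex. *)

definition japan :: "real \<Rightarrow> real" where
  "japan x = sqrt (1 + x\<^sup>2)"

definition sob_int :: "real \<Rightarrow> (real \<Rightarrow> complex) \<Rightarrow> ennreal" where
  "sob_int r f = (\<integral>\<^sup>+ \<xi>. ennreal (japan \<xi> powr (2 * r) * (cmod (f \<xi>))\<^sup>2) \<partial>lborel)"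

definition loc_int :: "real \<Rightarrow> (real \<Rightarrow> complex) \<Rightarrow> ennreal" where
  "loc_int lam f = (\<integral>\<^sup>+ \<xi>\<in>{-1<..<1}. ennreal (cmod (f \<xi>) powr lam) \<partial>lborel)"

definition in_Hcal :: "real \<Rightarrow> real \<Rightarrow> (real \<Rightarrow> complex) \<Rightarrow> bool" where
  "in_Hcal lam r f \<longleftrightarrow> f \<in> borel_measurable lborel \<and> sob_int r f < \<infinity> \<and> loc_int lam f < \<infinity>"

definition Hcal_norm :: "real \<Rightarrow> real \<Rightarrow> (real \<Rightarrow> complex) \<Rightarrow> real" where
  "Hcal_norm lam r f = sqrt (enn2real (sob_int r f)) + (enn2real (loc_int lam f)) powr (1 / lam)"

definition kdv_phase :: "real \<Rightarrow> real \<Rightarrow> real \<Rightarrow> real" where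
  "kdv_phase \<xi> \<xi>1 \<xi>2 = 3 * \<xi> * \<xi>1 * \<xi>2"

(* Fourier transform of T_\<sigma>(u1,u2), in terms of f1 = \<hat>u1, f2 = \<hat>u2 *)
definition T_sigma :: "real \<Rightarrow> (real \<Rightarrow> complex) \<Rightarrow> (real \<Rightarrow> complex) \<Rightarrow> real \<Rightarrow> complex" where
  "T_sigma \<sigma> f1 f2 \<xi> = (\<integral> \<xi>1. complex_of_real (\<xi> / japan (kdv_phase \<xi> \<xi>1 (\<xi> - \<xi>1)) powr \<sigma>)
        * f1 \<xi>1 * f2 (\<xi> - \<xi>1) \<partial>lborel)"

end

theory Submission
  imports Defs
begin

lemma nn_transl:
  fixes b :: "real \<Rightarrow> ennreal"
  assumes [measurable]: "b \<in> borel_measurable borel"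
  shows "(\<integral>\<^sup>+x. b (c - x) \<partial>lborel) = (\<integral>\<^sup>+x. b x \<partial>lborel)"
  using nn_integral_real_affine[OF assms, of "-1" c] by simp

lemma nn_transl':
  fixes b :: "real \<Rightarrow> ennreal"
  assumes [measurable]: "b \<in> borel_measurable borel"
  shows "(\<integral>\<^sup>+x. b (x - c) \<partial>lborel) = (\<integral>\<^sup>+x. b x \<partial>lborel)"
  using nn_integral_real_affine[OF assms, of "1" "-c"] by simp

lemma conv_total:
  fixes h b :: "real \<Rightarrow> ennreal"
  assumes [measurable]: "h \<in> borel_measurable borel" "b \<in> borel_measurable borel"
  shows "(\<integral>\<^sup>+x. (\<integral>\<^sup>+y. h y * b (x - y) \<partial>lborel) \<partial>lborel) = (\<integral>\<^sup>+y. h y \<partial>lborel) * (\<integral>\<^sup>+x. b x \<partial>lborel)"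
proof -
  have "(\<integral>\<^sup>+x. (\<integral>\<^sup>+y. h y * b (x - y) \<partial>lborel) \<partial>lborel) = (\<integral>\<^sup>+y. (\<integral>\<^sup>+x. h y * b (x - y) \<partial>lborel) \<partial>lborel)"
    by (rule lborel_pair.Fubini'[symmetric]) measurable
  also have "\<dots> = (\<integral>\<^sup>+y. h y * (\<integral>\<^sup>+x. b x \<partial>lborel) \<partial>lborel)"
    by (simp add: nn_integral_cmult nn_transl')
  also have "\<dots> = (\<integral>\<^sup>+y. h y \<partial>lborel) * (\<integral>\<^sup>+x. b x \<partial>lborel)"
    by (simp add: nn_integral_multc)
  finally show ?thesis .
qed

lemma CS_weighted:
  fixes h a :: "real \<Rightarrow> ennreal"
  assumes [measurable]: "h \<in> borel_measurable borel" "a \<in> borel_measurable borel"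
  shows "(\<integral>\<^sup>+y. h y * a y \<partial>lborel)\<^sup>2 \<le> (\<integral>\<^sup>+y. h y \<partial>lborel) * (\<integral>\<^sup>+y. h y * (a y)\<^sup>2 \<partial>lborel)"
proof -
  have 1: "(\<integral>\<^sup>+y. h y * a y \<partial>lborel) = (\<integral>\<^sup>+y. 1 * a y \<partial>density lborel h)"
    by (simp add: nn_integral_density)
  have 2: "(\<integral>\<^sup>+y. h y \<partial>lborel) = (\<integral>\<^sup>+y. 1 ^ 2 \<partial>density lborel h)"
    by (subst nn_integral_density) auto
  have 3: "(\<integral>\<^sup>+y. h y * (a y)\<^sup>2 \<partial>lborel) = (\<integral>\<^sup>+y. (a y)\<^sup>2 \<partial>density lborel h)"
    by (simp add: nn_integral_density)
  show ?thesis unfolding 1 2 3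
    by (rule Cauchy_Schwarz_nn_integral) measurable
qed

lemma young:
  fixes h a :: "real \<Rightarrow> ennreal"
  assumes [measurable]: "h \<in> borel_measurable borel" "a \<in> borel_measurable borel"
  shows "(\<integral>\<^sup>+x. (\<integral>\<^sup>+y. h y * a (x - y) \<partial>lborel)\<^sup>2 \<partial>lborel) \<le> (\<integral>\<^sup>+y. h y \<partial>lborel)\<^sup>2 * (\<integral>\<^sup>+x. (a x)\<^sup>2 \<partial>lborel)"
proof -
  have "(\<integral>\<^sup>+x. (\<integral>\<^sup>+y. h y * a (x - y) \<partial>lborel)\<^sup>2 \<partial>lborel) \<le>
     (\<integral>\<^sup>+x. (\<integral>\<^sup>+y. h y \<partial>lborel) * (\<integral>\<^sup>+y. h y * (a (x - y))\<^sup>2 \<partial>lborel) \<partial>lborel)"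
    by (intro nn_integral_mono CS_weighted) measurable
  also have "\<dots> = (\<integral>\<^sup>+y. h y \<partial>lborel) * (\<integral>\<^sup>+x. (\<integral>\<^sup>+y. h y * (a (x - y))\<^sup>2 \<partial>lborel) \<partial>lborel)"
    by (rule nn_integral_cmult) measurable
  also have "(\<integral>\<^sup>+x. (\<integral>\<^sup>+y. h y * (a (x - y))\<^sup>2 \<partial>lborel) \<partial>lborel) = (\<integral>\<^sup>+y. h y \<partial>lborel) * (\<integral>\<^sup>+x. (a x)\<^sup>2 \<partial>lborel)"
    using conv_total[of h "\<lambda>x. (a x)\<^sup>2"] by simp
  finally show ?thesis by (simp add: power2_eq_square mult.assoc)
qed

lemma alg1: fixes a b X Y A B p q :: real
  shows "A>0 \<Longrightarrow> B>0 \<Longrightarrow> p>0 \<Longrightarrow> q>0 \<Longrightarrow> a*b*(X/A/p + Y/B/q) = (a*b/(p*A))*X + (a*b/(q*B))*Y"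
  by (simp add: field_simps)
lemma alg2: fixes L A p :: real
  shows "A>0 \<Longrightarrow> p>0 \<Longrightarrow> L \<le> A \<Longrightarrow> L / (p * A) \<le> 1 / p"
  by (simp add: field_simps)
lemma alg3: fixes F w a b :: real
  shows "a>0 \<Longrightarrow> b>0 \<Longrightarrow> F * w = a * b * ((F / a) * (w / b))"
  by (simp add: field_simps)
lemma alg4: fixes a b X Y A B :: real
  shows "A>0 \<Longrightarrow> B>0 \<Longrightarrow> (a * b / A) * X + (a * b / B) * Y = a * b * (X / A + Y / B)"
  by (simp add: field_simps)

lemma alg5: fixes a b c :: real shows "(a + c) * (b + c) = a*b + c*(a+b+c)"
  by (simp add: algebra_simps)
lemma alg6: fixes c e x :: real shows "c > 0 \<Longrightarrow> x \<le> e / c \<Longrightarrow> x * c \<le> e"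
  by (simp add: le_divide_eq)

lemma ennreal_lin2:
  fixes a b c d :: real
  assumes "0 \<le> a" "0 \<le> b" "0 \<le> c" "0 \<le> d"
  shows "ennreal a * ennreal b + ennreal c * ennreal d = ennreal (a * b + c * d)"
  using assms by (simp add: ennreal_plus ennreal_mult)

lemma holder_set:
  fixes F w :: "real \<Rightarrow> real" and A :: "real set" and p q L D :: real
  assumes [measurable]: "F \<in> borel_measurable borel" "w \<in> borel_measurable borel" "A \<in> sets borel"
    and nn: "\<And>x. 0 \<le> F x" "\<And>x. 0 \<le> w x"
    and pq: "p > 1" "q > 1" "1/p + 1/q = 1"
    and LF: "(\<integral>\<^sup>+x\<in>A. ennreal (F x powr p) \<partial>lborel) = ennreal L" "L \<ge> 0"
    and DW: "(\<integral>\<^sup>+x\<in>A. ennreal (w x powr q) \<partial>lborel) = ennreal D" "D \<ge> 0"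
  shows "(\<integral>\<^sup>+x\<in>A. ennreal (F x * w x) \<partial>lborel) \<le> ennreal (L powr (1/p) * D powr (1/q))"
proof (rule ennreal_le_epsilon)
  fix e :: real assume e: "0 < e"
  define \<eta> where "\<eta> = min 1 (e / (L powr (1/p) + D powr (1/q) + 1))"
  have den: "L powr (1/p) + D powr (1/q) + 1 > 0" by (simp add: add_nonneg_pos)
  have \<eta>pos: "\<eta> > 0" using e den unfolding \<eta>_def by simp
  define \<alpha> where "\<alpha> = L powr (1/p) + \<eta>"
  define \<beta> where "\<beta> = D powr (1/q) + \<eta>"
  have \<alpha>pos: "\<alpha> > 0" using \<eta>pos unfolding \<alpha>_def by (simp add: add_nonneg_pos)
  have \<beta>pos: "\<beta> > 0" using \<eta>pos unfolding \<beta>_def by (simp add: add_nonneg_pos)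
  have \<alpha>p: "L \<le> \<alpha> powr p"
  proof -
    have "(L powr (1/p)) powr p = L powr (1/p * p)" by (rule powr_powr)
    also have "1/p * p = 1" using pq by simp
    also have "L powr 1 = L" using LF(2) by simp
    finally have "L = (L powr (1/p)) powr p" by simp
    also have "\<dots> \<le> \<alpha> powr p"
    proof (rule powr_mono2)
      show "0 \<le> p" using pq by simp
      show "0 \<le> L powr (1/p)" by simp
      show "L powr (1/p) \<le> \<alpha>" unfolding \<alpha>_def using \<eta>pos by simp
    qed
    finally show ?thesis .
  qed
  have \<beta>q: "D \<le> \<beta> powr q"
  proof -
    have "(D powr (1/q)) powr q = D powr (1/q * q)" by (rule powr_powr)
    also have "1/q * q = 1" using pq by simp
    also have "D powr 1 = D" using DW(2) by simp
    finally have "D = (D powr (1/q)) powr q" by simp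
    also have "\<dots> \<le> \<beta> powr q"
    proof (rule powr_mono2)
      show "0 \<le> q" using pq by simp
      show "0 \<le> D powr (1/q)" by simp
      show "D powr (1/q) \<le> \<beta>" unfolding \<beta>_def using \<eta>pos by simp
    qed
    finally show ?thesis .
  qed
  have pw: "F x * w x \<le> (\<alpha> * \<beta> / (p * \<alpha> powr p)) * F x powr p + (\<alpha> * \<beta> / (q * \<beta> powr q)) * w x powr q" for x
  proof -
    have "F x * w x = \<alpha> * \<beta> * ((F x / \<alpha>) * (w x / \<beta>))" using \<alpha>pos \<beta>pos by (rule alg3)
    also have "\<dots> \<le> \<alpha> * \<beta> * ((F x / \<alpha>) powr p / p + (w x / \<beta>) powr q / q)"
    proof (rule mult_left_mono)
      show "(F x / \<alpha>) * (w x / \<beta>) \<le> (F x / \<alpha>) powr p / p + (w x / \<beta>) powr q / q"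
        by (rule Youngs_inequality) (use \<alpha>pos \<beta>pos nn pq in auto)
      show "0 \<le> \<alpha> * \<beta>" using \<alpha>pos \<beta>pos by simp
    qed
    also have "\<dots> = (\<alpha> * \<beta> / (p * \<alpha> powr p)) * F x powr p + (\<alpha> * \<beta> / (q * \<beta> powr q)) * w x powr q"
    proof -
      have e1: "(F x / \<alpha>) powr p = F x powr p / \<alpha> powr p" using nn \<alpha>pos by (simp add: powr_divide)
      have e2: "(w x / \<beta>) powr q = w x powr q / \<beta> powr q" using nn \<beta>pos by (simp add: powr_divide)
      show ?thesis unfolding e1 e2 using \<alpha>pos \<beta>pos pq by (intro alg1) auto
    qed
    finally show ?thesis .
  qed
  have c1: "0 \<le> \<alpha> * \<beta> / (p * \<alpha> powr p)" and c2: "0 \<le> \<alpha> * \<beta> / (q * \<beta> powr q)"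
    using \<alpha>pos \<beta>pos pq by auto
  have "(\<integral>\<^sup>+x\<in>A. ennreal (F x * w x) \<partial>lborel) \<le>
     (\<integral>\<^sup>+x. ennreal (\<alpha> * \<beta> / (p * \<alpha> powr p)) * (ennreal (F x powr p) * indicator A x)
           + ennreal (\<alpha> * \<beta> / (q * \<beta> powr q)) * (ennreal (w x powr q) * indicator A x) \<partial>lborel)"
  proof (intro nn_integral_mono)
    fix x
    show "ennreal (F x * w x) * indicator A x \<le> ennreal (\<alpha> * \<beta> / (p * \<alpha> powr p)) * (ennreal (F x powr p) * indicator A x)
           + ennreal (\<alpha> * \<beta> / (q * \<beta> powr q)) * (ennreal (w x powr q) * indicator A x)"
    proof -
      define k1 where "k1 = \<alpha> * \<beta> / (p * \<alpha> powr p)"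
      define k2 where "k2 = \<alpha> * \<beta> / (q * \<beta> powr q)"
      have k: "0 \<le> k1" "0 \<le> k2" using c1 c2 unfolding k1_def k2_def by auto
      have "ennreal (F x * w x) \<le> ennreal (k1 * F x powr p + k2 * w x powr q)"
        using pw[of x] unfolding k1_def k2_def by (intro ennreal_leI) auto
      also have "\<dots> = ennreal k1 * ennreal (F x powr p) + ennreal k2 * ennreal (w x powr q)"
        using k by (simp add: ennreal_plus ennreal_mult)
      finally have "ennreal (F x * w x) \<le> ennreal k1 * ennreal (F x powr p) + ennreal k2 * ennreal (w x powr q)" .
      then show ?thesis unfolding k1_def[symmetric] k2_def[symmetric]
        by (auto split: split_indicator)
    qed
  qed
  also have "\<dots> = ennreal (\<alpha> * \<beta> / (p * \<alpha> powr p)) * ennreal L + ennreal (\<alpha> * \<beta> / (q * \<beta> powr q)) * ennreal D"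
    by (subst nn_integral_add) (auto simp: nn_integral_cmult LF(1)[symmetric] DW(1)[symmetric])
  also have "\<dots> = ennreal (\<alpha> * \<beta> * (L / (p * \<alpha> powr p) + D / (q * \<beta> powr q)))"
  proof -
    have "ennreal (\<alpha> * \<beta> / (p * \<alpha> powr p)) * ennreal L + ennreal (\<alpha> * \<beta> / (q * \<beta> powr q)) * ennreal D
       = ennreal ((\<alpha> * \<beta> / (p * \<alpha> powr p)) * L + (\<alpha> * \<beta> / (q * \<beta> powr q)) * D)"
      using c1 LF(2) c2 DW(2) by (rule ennreal_lin2)
    also have "(\<alpha> * \<beta> / (p * \<alpha> powr p)) * L + (\<alpha> * \<beta> / (q * \<beta> powr q)) * D = \<alpha> * \<beta> * (L / (p * \<alpha> powr p) + D / (q * \<beta> powr q))"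
      using \<alpha>pos \<beta>pos pq by (intro alg4) auto
    finally show ?thesis .
  qed
  also have "\<dots> \<le> ennreal (\<alpha> * \<beta> * (1 / p + 1 / q))"
  proof (intro ennreal_leI mult_left_mono add_mono)
    show "L / (p * \<alpha> powr p) \<le> 1 / p" using \<alpha>p \<alpha>pos pq by (intro alg2) auto
    show "D / (q * \<beta> powr q) \<le> 1 / q" using \<beta>q \<beta>pos pq by (intro alg2) auto
  qed (use \<alpha>pos \<beta>pos in auto)
  also have "\<alpha> * \<beta> * (1 / p + 1 / q) = \<alpha> * \<beta>" using pq by simp
  also have "ennreal (\<alpha> * \<beta>) \<le> ennreal (L powr (1/p) * D powr (1/q) + e)"
  proof (rule ennreal_leI)
    have h1: "\<alpha> * \<beta> = L powr (1/p) * D powr (1/q) + \<eta> * (L powr (1/p) + D powr (1/q) + \<eta>)"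
      unfolding \<alpha>_def \<beta>_def by (rule alg5)
    have "\<eta> \<le> 1" unfolding \<eta>_def by simp
    then have h2: "\<eta> * (L powr (1/p) + D powr (1/q) + \<eta>) \<le> \<eta> * (L powr (1/p) + D powr (1/q) + 1)"
      using \<eta>pos by (intro mult_left_mono) auto
    have "\<eta> \<le> e / (L powr (1/p) + D powr (1/q) + 1)" unfolding \<eta>_def by simp
    then have h3: "\<eta> * (L powr (1/p) + D powr (1/q) + 1) \<le> e" using den by (intro alg6)
    show "\<alpha> * \<beta> \<le> L powr (1/p) * D powr (1/q) + e" using h1 h2 h3 by linarith
  qed
  finally show "(\<integral>\<^sup>+x\<in>A. ennreal (F x * w x) \<partial>lborel) \<le> ennreal (L powr (1/p) * D powr (1/q)) + ennreal e"
    using e by (simp add: ennreal_plus)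
qed

lemma nn_reflect:
  fixes b :: "real \<Rightarrow> ennreal"
  assumes [measurable]: "b \<in> borel_measurable borel"
  shows "(\<integral>\<^sup>+x. b (- x) \<partial>lborel) = (\<integral>\<^sup>+x. b x \<partial>lborel)"
  using nn_integral_real_affine[OF assms, of "-1" 0] by simp

lemma nn_even_split:
  fixes g :: "real \<Rightarrow> real" and A :: "real set"
  assumes [measurable]: "g \<in> borel_measurable borel" "A \<in> sets borel"
    and even: "\<And>x. g (-x) = g x" and "\<And>x. x \<in> A \<Longrightarrow> - x \<in> A"
  shows "(\<integral>\<^sup>+x. ennreal (g x) * indicator A x \<partial>lborel) \<le> 2 * (\<integral>\<^sup>+x. ennreal (g x) * indicator (A \<inter> {0..}) x \<partial>lborel)"
proof -
  have "(\<integral>\<^sup>+x. ennreal (g x) * indicator A x \<partial>lborel) \<le>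
     (\<integral>\<^sup>+x. ennreal (g x) * indicator (A \<inter> {0..}) x + ennreal (g (-x)) * indicator (A \<inter> {0..}) (-x) \<partial>lborel)"
    by (intro nn_integral_mono) (auto simp: even assms(4) split: split_indicator)
  also have "\<dots> = (\<integral>\<^sup>+x. ennreal (g x) * indicator (A \<inter> {0..}) x \<partial>lborel) + (\<integral>\<^sup>+x. ennreal (g (-x)) * indicator (A \<inter> {0..}) (-x) \<partial>lborel)"
    by (rule nn_integral_add) measurable
  also have "(\<integral>\<^sup>+x. ennreal (g (-x)) * indicator (A \<inter> {0..}) (-x) \<partial>lborel) = (\<integral>\<^sup>+x. ennreal (g x) * indicator (A \<inter> {0..}) x \<partial>lborel)"
    by (rule nn_reflect[where b = "\<lambda>x. ennreal (g x) * indicator (A \<inter> {0..}) x"]) measurable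
  finally show ?thesis by (simp add: mult_2)
qed

lemma ennreal_2mult: "0 \<le> x \<Longrightarrow> 2 * ennreal x = ennreal (2 * x)"
  by (simp add: ennreal_mult)

lemma int_sing:
  fixes a :: real assumes "0 \<le> a" "a < 1"
  shows "(\<integral>\<^sup>+x. ennreal (\<bar>x\<bar> powr (-a)) * indicator {-1<..<1} x \<partial>lborel) \<le> ennreal (2 / (1 - a))"
proof -
  have A: "(\<integral>\<^sup>+x. ennreal (\<bar>x\<bar> powr (-a)) * indicator {-1<..<1} x \<partial>lborel) \<le>
      2 * (\<integral>\<^sup>+x. ennreal (\<bar>x\<bar> powr (-a)) * indicator ({-1<..<1} \<inter> {0..}) x \<partial>lborel)"
    by (rule nn_even_split) auto
  have B: "(\<integral>\<^sup>+x. ennreal (\<bar>x\<bar> powr (-a)) * indicator ({-1<..<1} \<inter> {0..}) x \<partial>lborel) \<le>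
     (\<integral>\<^sup>+x. ennreal (x powr (-a)) * indicator {0..1} x \<partial>lborel)"
    by (intro nn_integral_mono) (auto split: split_indicator)
  have C: "(\<integral>\<^sup>+x. ennreal (x powr (-a)) * indicator {0..1} x \<partial>lborel) = ennreal (1 / (1 - a))"
  proof -
    have "((\<lambda>x. x powr (-a)) has_integral (1 powr (-a+1) / (-a+1))) {0..1}"
      by (rule has_integral_powr_from_0) (use assms in auto)
    then have hi: "((\<lambda>x::real. x powr (-a)) has_integral (1 / (1 - a))) {0..1}" by simp
    show ?thesis using nn_integral_has_integral_lebesgue'[OF _ hi] by auto
  qed
  have "2 * ennreal (1 / (1 - a)) = ennreal (2 / (1 - a))"
    using assms ennreal_2mult[of "1 / (1 - a)"] by simp
  moreover note order_trans[OF A mult_left_mono[OF order_trans[OF B eq_refl[OF C]] zero_le]]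
  ultimately show ?thesis by simp
qed

lemma int_tail:
  fixes p :: real assumes "1 < p"
  shows "(\<integral>\<^sup>+x. ennreal (\<bar>x\<bar> powr (-p)) * indicator {x. 1 \<le> \<bar>x\<bar>} x \<partial>lborel) \<le> ennreal (2 / (p - 1))"
proof -
  have A: "(\<integral>\<^sup>+x. ennreal (\<bar>x\<bar> powr (-p)) * indicator {x. 1 \<le> \<bar>x\<bar>} x \<partial>lborel) \<le>
      2 * (\<integral>\<^sup>+x. ennreal (\<bar>x\<bar> powr (-p)) * indicator ({x. 1 \<le> \<bar>x\<bar>} \<inter> {0..}) x \<partial>lborel)"
    by (rule nn_even_split) auto
  have B: "(\<integral>\<^sup>+x. ennreal (\<bar>x\<bar> powr (-p)) * indicator ({x. 1 \<le> \<bar>x\<bar>} \<inter> {0..}) x \<partial>lborel) \<le>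
     (\<integral>\<^sup>+x. ennreal (x powr (-p)) * indicator {1..} x \<partial>lborel)"
    by (intro nn_integral_mono) (auto split: split_indicator)
  have C: "(\<integral>\<^sup>+x. ennreal (x powr (-p)) * indicator {1..} x \<partial>lborel) = ennreal (1 / (p - 1))"
  proof -
    have "((\<lambda>x. x powr (-p)) has_integral (-(1 powr (-p+1)) / (-p+1))) {1..}"
      by (rule has_integral_powr_to_inf) (use assms in auto)
    moreover have "-(1 powr (-p+1)) / (-p+1) = 1 / (p - 1)" using assms by (simp add: field_simps)
    ultimately have hi: "((\<lambda>x::real. x powr (-p)) has_integral (1 / (p - 1))) {1..}"
      by simp
    show ?thesis using nn_integral_has_integral_lebesgue'[OF _ hi] by auto
  qed
  have "2 * ennreal (1 / (p - 1)) = ennreal (2 / (p - 1))"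
    using assms ennreal_2mult[of "1 / (p - 1)"] by simp
  moreover note order_trans[OF A mult_left_mono[OF order_trans[OF B eq_refl[OF C]] zero_le]]
  ultimately show ?thesis by simp
qed

lemma ineqA:
  fixes W Wz x y J s \<epsilon> \<sigma> :: real
  assumes "0 < y" "1 \<le> x" "0 < Wz" "0 < W" "W \<le> 2 * Wz" "W \<le> 2 * x" "x * x * y \<le> J"
    "0 \<le> s" "0 \<le> \<epsilon>" "0 \<le> \<sigma>" "1 + \<epsilon> \<le> 2 * \<sigma>"
  shows "W powr (s + \<epsilon>) * (x / J powr \<sigma>) \<le> 2 powr (s + \<epsilon>) * (y powr (-\<sigma>) * Wz powr s)"
proof -
  have xp: "0 < x" using assms by simp
  have Jp: "0 < J" using assms(1) xp assms(7) by (smt (verit) mult_pos_pos)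
  have "ln W \<le> ln (2 * Wz)" by (rule ln_le_cancel_iff[THEN iffD2]) (use assms in simp_all)
  then have lW1: "ln W \<le> ln 2 + ln Wz" using assms by (simp add: ln_mult)
  have "ln W \<le> ln (2 * x)" by (rule ln_le_cancel_iff[THEN iffD2]) (use assms xp in simp_all)
  then have lW2: "ln W \<le> ln 2 + ln x" using assms xp by (simp add: ln_mult)
  have "ln (x * x * y) \<le> ln J" by (rule ln_le_cancel_iff[THEN iffD2]) (use assms(1,7) xp Jp in simp_all)
  then have lJ: "2 * ln x + ln y \<le> ln J" using xp assms(1) by (simp add: ln_mult)
  have lx: "0 \<le> ln x" using assms(2) by simp
  have m1: "s * ln W \<le> s * (ln 2 + ln Wz)" using lW1 assms by (intro mult_left_mono) auto
  have m2: "\<epsilon> * ln W \<le> \<epsilon> * (ln 2 + ln x)" using lW2 assms by (intro mult_left_mono) auto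
  have m3: "\<sigma> * (2 * ln x + ln y) \<le> \<sigma> * ln J" using lJ assms by (intro mult_left_mono) auto
  have m4: "(1 + \<epsilon> - 2 * \<sigma>) * ln x \<le> 0" using lx assms by (intro mult_nonpos_nonneg) auto
  have L: "ln (W powr (s + \<epsilon>) * (x / J powr \<sigma>)) = (s + \<epsilon>) * ln W + ln x - \<sigma> * ln J"
    using assms xp Jp by (simp add: ln_mult ln_div ln_powr)
  have R: "ln (2 powr (s + \<epsilon>) * (y powr (-\<sigma>) * Wz powr s)) = (s + \<epsilon>) * ln 2 - \<sigma> * ln y + s * ln Wz"
    using assms by (simp add: ln_mult ln_powr)
  have "ln (W powr (s + \<epsilon>) * (x / J powr \<sigma>)) \<le> ln (2 powr (s + \<epsilon>) * (y powr (-\<sigma>) * Wz powr s))"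
    unfolding L R using m1 m2 m3 m4 by (simp add: algebra_simps)
  then show ?thesis using assms xp Jp by simp
qed

lemma ineqC:
  fixes W Wy Wz x m J s \<epsilon> \<sigma> :: real
  assumes "1 \<le> m" "1 \<le> x" "0 < W" "W \<le> 2 * x" "x * x * m \<le> J" "m * x \<le> 2 * (Wy * Wz)"
    "0 < Wy" "0 < Wz"
    "0 \<le> s" "0 \<le> \<epsilon>" "0 \<le> \<sigma>" "1 + \<epsilon> \<le> 2 * \<sigma>"
  shows "W powr (s + \<epsilon>) * (x / J powr \<sigma>) \<le> 2 powr (2 * s + \<epsilon>) * (m powr (-(\<sigma> + s)) * (Wy powr s * Wz powr s))"
proof -
  have xp: "0 < x" using assms by simp
  have mp: "0 < m" using assms by simp
  have Jp: "0 < J" using mp xp assms(5) by (smt (verit) mult_pos_pos)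
  have "ln W \<le> ln (2 * x)" by (rule ln_le_cancel_iff[THEN iffD2]) (use assms xp in simp_all)
  then have lW2: "ln W \<le> ln 2 + ln x" using assms xp by (simp add: ln_mult)
  have "ln (x * x * m) \<le> ln J" by (rule ln_le_cancel_iff[THEN iffD2]) (use assms(5) xp mp Jp in simp_all)
  then have lJ: "2 * ln x + ln m \<le> ln J" using xp mp by (simp add: ln_mult)
  have "ln (m * x) \<le> ln (2 * (Wy * Wz))" by (rule ln_le_cancel_iff[THEN iffD2]) (use assms(6,7,8) xp mp in simp_all)
  then have lP: "ln m + ln x \<le> ln 2 + ln Wy + ln Wz" using xp mp assms(7,8) by (simp add: ln_mult)
  have lx: "0 \<le> ln x" using assms(2) by simp
  have m1: "s * ln W \<le> s * (ln 2 + ln x)" using lW2 assms by (intro mult_left_mono) auto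
  have m2: "\<epsilon> * ln W \<le> \<epsilon> * (ln 2 + ln x)" using lW2 assms by (intro mult_left_mono) auto
  have m3: "\<sigma> * (2 * ln x + ln m) \<le> \<sigma> * ln J" using lJ assms by (intro mult_left_mono) auto
  have m4: "(1 + \<epsilon> - 2 * \<sigma>) * ln x \<le> 0" using lx assms by (intro mult_nonpos_nonneg) auto
  have m5: "s * (ln m + ln x) \<le> s * (ln 2 + ln Wy + ln Wz)" using lP assms by (intro mult_left_mono) auto
  have L: "ln (W powr (s + \<epsilon>) * (x / J powr \<sigma>)) = (s + \<epsilon>) * ln W + ln x - \<sigma> * ln J"
    using assms xp Jp by (simp add: ln_mult ln_div ln_powr)
  have R: "ln (2 powr (2 * s + \<epsilon>) * (m powr (-(\<sigma> + s)) * (Wy powr s * Wz powr s))) = (2 * s + \<epsilon>) * ln 2 - (\<sigma> + s) * ln m + s * ln Wy + s * ln Wz"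
    using assms mp by (simp add: ln_mult ln_powr algebra_simps)
  have "ln (W powr (s + \<epsilon>) * (x / J powr \<sigma>)) \<le> ln (2 powr (2 * s + \<epsilon>) * (m powr (-(\<sigma> + s)) * (Wy powr s * Wz powr s)))"
    unfolding L R using m1 m2 m3 m4 m5 by (simp add: algebra_simps)
  then show ?thesis using assms xp mp Jp by simp
qed

lemma lin_aux: fixes a b c :: real shows "a \<le> b + c \<Longrightarrow> c < 1 \<Longrightarrow> 2 \<le> a \<Longrightarrow> a \<le> 2 * b" by linarith

lemma japan_pos: "0 < japan x" unfolding japan_def by (simp add: add_pos_nonneg)
lemma japan_ge1: "1 \<le> japan x" unfolding japan_def by simp
lemma japan_ge_abs: "\<bar>x\<bar> \<le> japan x"
  unfolding japan_def by (rule real_le_rsqrt) simp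
lemma japan_le2: assumes "\<bar>x\<bar> \<le> 2 * \<bar>y\<bar>" shows "japan x \<le> 2 * japan y"
proof -
  have "\<bar>x\<bar>\<^sup>2 \<le> (2 * \<bar>y\<bar>)\<^sup>2" using assms by (intro power_mono) auto
  then have "x\<^sup>2 \<le> (2 * \<bar>y\<bar>)\<^sup>2" by simp
  then have "1 + x\<^sup>2 \<le> 2\<^sup>2 * (1 + y\<^sup>2)" by (simp add: power_mult_distrib)
  then have "sqrt (1 + x\<^sup>2) \<le> sqrt (2\<^sup>2 * (1 + y\<^sup>2))" by (rule real_sqrt_le_mono)
  also have "sqrt (2\<^sup>2 * (1 + y\<^sup>2)) = 2 * sqrt (1 + y\<^sup>2)" by (subst real_sqrt_mult) simp
  finally show ?thesis unfolding japan_def .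
qed
lemma japan_le_2abs: assumes "1 \<le> \<bar>x\<bar>" shows "japan x \<le> 2 * \<bar>x\<bar>"
proof -
  have "1 \<le> x\<^sup>2" using assms by (metis abs_ge_self abs_le_square_iff abs_one one_power2)
  then have "1 + x\<^sup>2 \<le> (2 * \<bar>x\<bar>)\<^sup>2" by (simp add: power_mult_distrib)
  then have "sqrt (1 + x\<^sup>2) \<le> sqrt ((2 * \<bar>x\<bar>)\<^sup>2)" by (rule real_sqrt_le_mono)
  also have "sqrt ((2 * \<bar>x\<bar>)\<^sup>2) = 2 * \<bar>x\<bar>" by (subst real_sqrt_abs) simp
  finally show ?thesis unfolding japan_def .
qed
lemma japan_le3: assumes "\<bar>x\<bar> \<le> 2" shows "japan x \<le> 3"
proof -
  have "x\<^sup>2 \<le> 2\<^sup>2" using assms by (metis abs_le_square_iff abs_numeral)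
  then have "1 + x\<^sup>2 \<le> 3\<^sup>2" by simp
  then have "sqrt (1 + x\<^sup>2) \<le> sqrt (3\<^sup>2)" by (rule real_sqrt_le_mono)
  then show ?thesis unfolding japan_def by simp
qed

lemma japan_borel[measurable]: "japan \<in> borel_measurable borel" unfolding japan_def by measurable

definition Kf :: "real \<Rightarrow> real \<Rightarrow> real \<Rightarrow> real" where
  "Kf \<sigma> \<xi> \<eta> = \<bar>\<xi>\<bar> / japan (kdv_phase \<xi> \<eta> (\<xi> - \<eta>)) powr \<sigma>"

lemma Kf_borel[measurable]: "(\<lambda>(x, y). Kf \<sigma> x y) \<in> borel_measurable (borel \<Otimes>\<^sub>M borel)"
  unfolding Kf_def kdv_phase_def by measurable

lemma Kf_nonneg: "0 \<le> Kf \<sigma> \<xi> \<eta>" unfolding Kf_def by simp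

lemma Kf_le: assumes "0 \<le> \<sigma>" shows "Kf \<sigma> \<xi> \<eta> \<le> \<bar>\<xi>\<bar>"
proof -
  have "1 \<le> japan (kdv_phase \<xi> \<eta> (\<xi> - \<eta>)) powr \<sigma>" using japan_ge1 assms by (simp add: ge_one_powr_ge_zero)
  then show ?thesis unfolding Kf_def by (simp add: divide_le_eq mult_le_cancel_left1)
qed

lemma Kf_sym: "Kf \<sigma> \<xi> (\<xi> - \<eta>) = Kf \<sigma> \<xi> \<eta>"
  unfolding Kf_def kdv_phase_def by (simp add: mult.commute mult.left_commute)

lemma phase_abs: "\<bar>kdv_phase \<xi> \<eta> (\<xi> - \<eta>)\<bar> = 3 * \<bar>\<xi>\<bar> * \<bar>\<eta>\<bar> * \<bar>\<xi> - \<eta>\<bar>"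
  unfolding kdv_phase_def by (simp add: abs_mult)

lemma KA:
  assumes "0 \<le> s" "0 \<le> \<epsilon>" "0 \<le> \<sigma>" "1 + \<epsilon> \<le> 2 * \<sigma>" "2 \<le> \<bar>\<xi>\<bar>" "\<bar>\<eta>\<bar> < 1" "\<eta> \<noteq> 0"
  shows "japan \<xi> powr (s + \<epsilon>) * Kf \<sigma> \<xi> \<eta> \<le> 2 powr (s + \<epsilon>) * (\<bar>\<eta>\<bar> powr (-\<sigma>) * japan (\<xi> - \<eta>) powr s)"
  unfolding Kf_def
proof (rule ineqA)
  have "\<bar>\<xi>\<bar> \<le> \<bar>\<xi> - \<eta>\<bar> + \<bar>\<eta>\<bar>" using abs_triangle_ineq[of "\<xi> - \<eta>" \<eta>] by simp
  then have z: "\<bar>\<xi>\<bar> \<le> 2 * \<bar>\<xi> - \<eta>\<bar>" using assms(6,5) by (rule lin_aux)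
  show "japan \<xi> \<le> 2 * japan (\<xi> - \<eta>)" using z by (rule japan_le2)
  show "japan \<xi> \<le> 2 * \<bar>\<xi>\<bar>" using assms by (intro japan_le_2abs) auto
  have "\<bar>\<xi>\<bar> * \<bar>\<xi>\<bar> * \<bar>\<eta>\<bar> \<le> \<bar>\<xi>\<bar> * (2 * \<bar>\<xi> - \<eta>\<bar>) * \<bar>\<eta>\<bar>"
    using z by (intro mult_right_mono mult_left_mono) auto
  also have "\<dots> \<le> 3 * \<bar>\<xi>\<bar> * \<bar>\<eta>\<bar> * \<bar>\<xi> - \<eta>\<bar>" by (simp add: algebra_simps)
  also have "\<dots> = \<bar>kdv_phase \<xi> \<eta> (\<xi> - \<eta>)\<bar>" by (rule phase_abs[symmetric])
  also have "\<dots> \<le> japan (kdv_phase \<xi> \<eta> (\<xi> - \<eta>))" by (rule japan_ge_abs)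
  finally show "\<bar>\<xi>\<bar> * \<bar>\<xi>\<bar> * \<bar>\<eta>\<bar> \<le> japan (kdv_phase \<xi> \<eta> (\<xi> - \<eta>))" .
qed (use assms japan_pos in auto)

lemma KC:
  assumes "0 \<le> s" "0 \<le> \<epsilon>" "0 \<le> \<sigma>" "1 + \<epsilon> \<le> 2 * \<sigma>" "2 \<le> \<bar>\<xi>\<bar>" "1 \<le> \<bar>\<eta>\<bar>" "1 \<le> \<bar>\<xi> - \<eta>\<bar>"
  shows "japan \<xi> powr (s + \<epsilon>) * Kf \<sigma> \<xi> \<eta> \<le> 2 powr (2 * s + \<epsilon>) * ((\<bar>\<eta>\<bar> powr (-(\<sigma> + s)) + \<bar>\<xi> - \<eta>\<bar> powr (-(\<sigma> + s))) * (japan \<eta> powr s * japan (\<xi> - \<eta>) powr s))"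
proof -
  define m where "m = min \<bar>\<eta>\<bar> \<bar>\<xi> - \<eta>\<bar>"
  define M where "M = max \<bar>\<eta>\<bar> \<bar>\<xi> - \<eta>\<bar>"
  have mM: "m * M = \<bar>\<eta>\<bar> * \<bar>\<xi> - \<eta>\<bar>" unfolding m_def M_def by (simp add: min_def max_def mult.commute)
  have "\<bar>\<xi>\<bar> \<le> \<bar>\<xi> - \<eta>\<bar> + \<bar>\<eta>\<bar>" using abs_triangle_ineq[of "\<xi> - \<eta>" \<eta>] by simp
  moreover have "\<bar>\<eta>\<bar> \<le> M" "\<bar>\<xi> - \<eta>\<bar> \<le> M" unfolding M_def by auto
  note this
  ultimately have Mx: "\<bar>\<xi>\<bar> \<le> 2 * M" by linarith
  have m1: "1 \<le> m" unfolding m_def using assms by simp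
  have "japan \<xi> powr (s + \<epsilon>) * Kf \<sigma> \<xi> \<eta> \<le> 2 powr (2 * s + \<epsilon>) * (m powr (-(\<sigma> + s)) * (japan \<eta> powr s * japan (\<xi> - \<eta>) powr s))"
    unfolding Kf_def
  proof (rule ineqC)
    show "japan \<xi> \<le> 2 * \<bar>\<xi>\<bar>" using assms by (intro japan_le_2abs) auto
    have "\<bar>\<xi>\<bar> * \<bar>\<xi>\<bar> * m \<le> \<bar>\<xi>\<bar> * (2 * M) * m"
      using Mx m1 by (intro mult_right_mono mult_left_mono) auto
    also have "\<dots> \<le> 3 * \<bar>\<xi>\<bar> * (m * M)" using m1 \<open>\<bar>\<eta>\<bar> \<le> M\<close> by (simp add: algebra_simps)
    also have "\<dots> = \<bar>kdv_phase \<xi> \<eta> (\<xi> - \<eta>)\<bar>" unfolding mM phase_abs by (simp add: algebra_simps)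
    also have "\<dots> \<le> japan (kdv_phase \<xi> \<eta> (\<xi> - \<eta>))" by (rule japan_ge_abs)
    finally show "\<bar>\<xi>\<bar> * \<bar>\<xi>\<bar> * m \<le> japan (kdv_phase \<xi> \<eta> (\<xi> - \<eta>))" .
    have "m * \<bar>\<xi>\<bar> \<le> m * (2 * M)" using Mx m1 by (intro mult_left_mono) auto
    also have "\<dots> = 2 * (\<bar>\<eta>\<bar> * \<bar>\<xi> - \<eta>\<bar>)" using mM by simp
    also have "\<dots> \<le> 2 * (japan \<eta> * japan (\<xi> - \<eta>))"
      using japan_pos[of \<eta>] japan_pos[of "\<xi> - \<eta>"] by (intro mult_left_mono mult_mono japan_ge_abs) auto
    finally show "m * \<bar>\<xi>\<bar> \<le> 2 * (japan \<eta> * japan (\<xi> - \<eta>))" .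
  qed (use assms japan_pos m1 in auto)
  also have "\<dots> \<le> 2 powr (2 * s + \<epsilon>) * ((\<bar>\<eta>\<bar> powr (-(\<sigma> + s)) + \<bar>\<xi> - \<eta>\<bar> powr (-(\<sigma> + s))) * (japan \<eta> powr s * japan (\<xi> - \<eta>) powr s))"
  proof -
    have "m powr (-(\<sigma> + s)) \<le> \<bar>\<eta>\<bar> powr (-(\<sigma> + s)) + \<bar>\<xi> - \<eta>\<bar> powr (-(\<sigma> + s))"
      unfolding m_def by (cases "\<bar>\<eta>\<bar> \<le> \<bar>\<xi> - \<eta>\<bar>") (auto simp: min_def)
    then show ?thesis by (intro mult_left_mono mult_right_mono) auto
  qed
  finally show ?thesis .
qed

lemma ennreal_sq2: fixes a b :: ennreal shows "(a + b)\<^sup>2 \<le> 2 * (a\<^sup>2 + b\<^sup>2)"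
proof (cases a rule: ennreal_cases)
  case (real x) note a = this
  show ?thesis
  proof (cases b rule: ennreal_cases)
    case (real y) note b = this
    have "(x + y)\<^sup>2 \<le> 2 * (x\<^sup>2 + y\<^sup>2)"
    proof -
      have "0 \<le> (x - y)\<^sup>2" by simp
      then show ?thesis by (simp add: power2_eq_square algebra_simps)
    qed
    then have 1: "ennreal ((x + y)\<^sup>2) \<le> ennreal (2 * (x\<^sup>2 + y\<^sup>2))" by (rule ennreal_leI)
    have "a + b = ennreal (x + y)" using a b by (simp add: ennreal_plus)
    then have 2: "(a + b)\<^sup>2 = ennreal ((x + y)\<^sup>2)" using a b by (simp only:) (rule ennreal_power, simp)
    have 3: "2 * (a\<^sup>2 + b\<^sup>2) = ennreal (2 * (x\<^sup>2 + y\<^sup>2))" using a b by (simp add: ennreal_plus ennreal_power ennreal_mult)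
    show ?thesis unfolding 2 3 by (rule 1)
  qed (simp add: a)
qed simp

lemma ennreal_sq3: fixes a b c :: ennreal shows "(a + b + c)\<^sup>2 \<le> 3 * (a\<^sup>2 + b\<^sup>2 + c\<^sup>2)"
proof (cases a rule: ennreal_cases)
  case (real x) note a = this
  show ?thesis
  proof (cases b rule: ennreal_cases)
    case (real y) note b = this
    show ?thesis
    proof (cases c rule: ennreal_cases)
      case (real z) note c = this
      have "(x + y + z)\<^sup>2 \<le> 3 * (x\<^sup>2 + y\<^sup>2 + z\<^sup>2)"
      proof -
        have "0 \<le> (x - y)\<^sup>2 + (y - z)\<^sup>2 + (x - z)\<^sup>2" by simp
        then show ?thesis by (simp add: power2_eq_square algebra_simps)
      qed
      then have 1: "ennreal ((x + y + z)\<^sup>2) \<le> ennreal (3 * (x\<^sup>2 + y\<^sup>2 + z\<^sup>2))" by (rule ennreal_leI)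
      have "a + b + c = ennreal (x + y + z)" using a b c by (simp add: ennreal_plus)
      then have 2: "(a + b + c)\<^sup>2 = ennreal ((x + y + z)\<^sup>2)" using a b c by (simp only:) (rule ennreal_power, simp)
      have 3: "3 * (a\<^sup>2 + b\<^sup>2 + c\<^sup>2) = ennreal (3 * (x\<^sup>2 + y\<^sup>2 + z\<^sup>2))" using a b c by (simp add: ennreal_plus ennreal_power ennreal_mult)
      show ?thesis unfolding 2 3 by (rule 1)
    qed (simp add: a b)
  qed (simp add: a)
qed simp

lemma T_bound:
  shows "ennreal (cmod (T_sigma \<sigma> f1 f2 \<xi>)) \<le> (\<integral>\<^sup>+\<eta>. ennreal (Kf \<sigma> \<xi> \<eta> * cmod (f1 \<eta>) * cmod (f2 (\<xi> - \<eta>))) \<partial>lborel)"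
proof -
  define g where "g = (\<lambda>\<eta>. complex_of_real (\<xi> / japan (kdv_phase \<xi> \<eta> (\<xi> - \<eta>)) powr \<sigma>) * f1 \<eta> * f2 (\<xi> - \<eta>))"
  have ng: "norm (g \<eta>) = Kf \<sigma> \<xi> \<eta> * cmod (f1 \<eta>) * cmod (f2 (\<xi> - \<eta>))" for \<eta>
  proof -
    have "norm (g \<eta>) = \<bar>\<xi> / japan (kdv_phase \<xi> \<eta> (\<xi> - \<eta>)) powr \<sigma>\<bar> * cmod (f1 \<eta>) * cmod (f2 (\<xi> - \<eta>))"
      unfolding g_def by (simp only: norm_mult norm_of_real)
    also have "\<bar>\<xi> / japan (kdv_phase \<xi> \<eta> (\<xi> - \<eta>)) powr \<sigma>\<bar> = Kf \<sigma> \<xi> \<eta>"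
      unfolding Kf_def using japan_pos[of "kdv_phase \<xi> \<eta> (\<xi> - \<eta>)"] by (simp add: abs_divide)
    finally show ?thesis .
  qed
  have T: "T_sigma \<sigma> f1 f2 \<xi> = integral\<^sup>L lborel g" unfolding T_sigma_def g_def by simp
  show ?thesis
  proof (cases "integrable lborel g")
    case True
    have "ennreal (cmod (integral\<^sup>L lborel g)) \<le> (\<integral>\<^sup>+x. norm (g x) \<partial>lborel)"
      by (rule integral_norm_bound_ennreal[OF True])
    then show ?thesis unfolding T ng .
  next
    case False
    then show ?thesis unfolding T by (simp add: not_integrable_integral_eq)
  qed
qed

lemma P_L2:
  fixes F1 F2 :: "real \<Rightarrow> real"
  assumes [measurable]: "F1 \<in> borel_measurable borel" "F2 \<in> borel_measurable borel"
    and nn: "\<And>x. 0 \<le> F1 x" "\<And>x. 0 \<le> F2 x" and "0 \<le> \<sigma>"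
  shows "(\<integral>\<^sup>+\<eta>. ennreal (Kf \<sigma> \<xi> \<eta> * F1 \<eta> * F2 (\<xi> - \<eta>)) \<partial>lborel)\<^sup>2
     \<le> ennreal (\<xi>\<^sup>2) * ((\<integral>\<^sup>+x. (ennreal (F1 x))\<^sup>2 \<partial>lborel) * (\<integral>\<^sup>+x. (ennreal (F2 x))\<^sup>2 \<partial>lborel))"
proof -
  have "(\<integral>\<^sup>+\<eta>. ennreal (Kf \<sigma> \<xi> \<eta> * F1 \<eta> * F2 (\<xi> - \<eta>)) \<partial>lborel) \<le>
        (\<integral>\<^sup>+\<eta>. ennreal \<bar>\<xi>\<bar> * (ennreal (F1 \<eta>) * ennreal (F2 (\<xi> - \<eta>))) \<partial>lborel)"
  proof (intro nn_integral_mono)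
    fix \<eta>
    have "Kf \<sigma> \<xi> \<eta> * F1 \<eta> * F2 (\<xi> - \<eta>) \<le> \<bar>\<xi>\<bar> * (F1 \<eta> * F2 (\<xi> - \<eta>))"
      using Kf_le[OF assms(5)] nn by (simp add: mult.assoc mult_right_mono)
    then show "ennreal (Kf \<sigma> \<xi> \<eta> * F1 \<eta> * F2 (\<xi> - \<eta>)) \<le> ennreal \<bar>\<xi>\<bar> * (ennreal (F1 \<eta>) * ennreal (F2 (\<xi> - \<eta>)))"
      using nn by (simp add: ennreal_mult[symmetric] ennreal_leI)
  qed
  also have "\<dots> = ennreal \<bar>\<xi>\<bar> * (\<integral>\<^sup>+\<eta>. ennreal (F1 \<eta>) * ennreal (F2 (\<xi> - \<eta>)) \<partial>lborel)"
    by (rule nn_integral_cmult) measurable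
  finally have 1: "(\<integral>\<^sup>+\<eta>. ennreal (Kf \<sigma> \<xi> \<eta> * F1 \<eta> * F2 (\<xi> - \<eta>)) \<partial>lborel)\<^sup>2 \<le>
      (ennreal \<bar>\<xi>\<bar> * (\<integral>\<^sup>+\<eta>. ennreal (F1 \<eta>) * ennreal (F2 (\<xi> - \<eta>)) \<partial>lborel))\<^sup>2"
    by (rule power_mono) simp
  have 2: "(\<integral>\<^sup>+\<eta>. ennreal (F1 \<eta>) * ennreal (F2 (\<xi> - \<eta>)) \<partial>lborel)\<^sup>2 \<le>
     (\<integral>\<^sup>+x. (ennreal (F1 x))\<^sup>2 \<partial>lborel) * (\<integral>\<^sup>+x. (ennreal (F2 (\<xi> - x)))\<^sup>2 \<partial>lborel)"
    by (rule Cauchy_Schwarz_nn_integral) measurable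
  have 3: "(\<integral>\<^sup>+x. (ennreal (F2 (\<xi> - x)))\<^sup>2 \<partial>lborel) = (\<integral>\<^sup>+x. (ennreal (F2 x))\<^sup>2 \<partial>lborel)"
    by (rule nn_transl[where b = "\<lambda>x. (ennreal (F2 x))\<^sup>2"]) measurable
  have 4: "(ennreal \<bar>\<xi>\<bar>)\<^sup>2 = ennreal (\<xi>\<^sup>2)" by (simp add: ennreal_power)
  from 1 have "(\<integral>\<^sup>+\<eta>. ennreal (Kf \<sigma> \<xi> \<eta> * F1 \<eta> * F2 (\<xi> - \<eta>)) \<partial>lborel)\<^sup>2 \<le>
      ennreal (\<xi>\<^sup>2) * (\<integral>\<^sup>+\<eta>. ennreal (F1 \<eta>) * ennreal (F2 (\<xi> - \<eta>)) \<partial>lborel)\<^sup>2"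
    by (simp add: power_mult_distrib 4)
  also have "\<dots> \<le> ennreal (\<xi>\<^sup>2) * ((\<integral>\<^sup>+x. (ennreal (F1 x))\<^sup>2 \<partial>lborel) * (\<integral>\<^sup>+x. (ennreal (F2 x))\<^sup>2 \<partial>lborel))"
    using 2 unfolding 3 by (rule mult_left_mono) simp
  finally show ?thesis .
qed

definition hA :: "real \<Rightarrow> (real \<Rightarrow> real) \<Rightarrow> real \<Rightarrow> real" where
  "hA \<sigma> F \<eta> = indicator {-1<..<1} \<eta> * (\<bar>\<eta>\<bar> powr (-\<sigma>) * F \<eta>)"

definition g1 :: "real \<Rightarrow> real \<Rightarrow> real" where
  "g1 p x = indicator {x. 1 \<le> \<bar>x\<bar>} x * \<bar>x\<bar> powr (-p)"

lemma hA_nonneg: "(\<And>x. 0 \<le> F x) \<Longrightarrow> 0 \<le> hA \<sigma> F \<eta>" unfolding hA_def by simp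
lemma g1_nonneg: "0 \<le> g1 p x" unfolding g1_def by simp

lemma hA_borel[measurable]: "F \<in> borel_measurable borel \<Longrightarrow> hA \<sigma> F \<in> borel_measurable borel"
  unfolding hA_def by measurable
lemma g1_borel[measurable]: "g1 p \<in> borel_measurable borel"
  unfolding g1_def by measurable

lemma pw_high:
  fixes F1 F2 :: "real \<Rightarrow> real"
  assumes par: "0 \<le> s" "0 \<le> \<epsilon>" "0 \<le> \<sigma>" "1 + \<epsilon> \<le> 2 * \<sigma>"
    and x2: "2 \<le> \<bar>\<xi>\<bar>" and ne: "\<eta> \<noteq> 0" "\<eta> \<noteq> \<xi>"
    and nn: "\<And>x. 0 \<le> F1 x" "\<And>x. 0 \<le> F2 x"
  shows "japan \<xi> powr (s + \<epsilon>) * (Kf \<sigma> \<xi> \<eta> * F1 \<eta> * F2 (\<xi> - \<eta>)) \<le>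
     2 powr (s + \<epsilon>) * (hA \<sigma> F1 \<eta> * (japan (\<xi> - \<eta>) powr s * F2 (\<xi> - \<eta>)))
   + 2 powr (s + \<epsilon>) * (hA \<sigma> F2 (\<xi> - \<eta>) * (japan \<eta> powr s * F1 \<eta>))
   + 2 powr (2 * s + \<epsilon>) * ((g1 (\<sigma> + s) \<eta> + g1 (\<sigma> + s) (\<xi> - \<eta>)) * (japan \<eta> powr s * F1 \<eta>) * (japan (\<xi> - \<eta>) powr s * F2 (\<xi> - \<eta>)))"
    (is "?L \<le> ?A + ?B + ?C")
proof -
  have A0: "0 \<le> ?A" using nn by (simp add: hA_nonneg)
  have B0: "0 \<le> ?B" using nn by (simp add: hA_nonneg)
  have C0: "0 \<le> ?C" using nn by (simp add: g1_nonneg)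
  have F12: "0 \<le> F1 \<eta> * F2 (\<xi> - \<eta>)" using nn by simp
  have eqL: "?L = (japan \<xi> powr (s + \<epsilon>) * Kf \<sigma> \<xi> \<eta>) * (F1 \<eta> * F2 (\<xi> - \<eta>))" by (simp add: mult_ac)
  consider (a) "\<bar>\<eta>\<bar> < 1" | (b) "\<bar>\<xi> - \<eta>\<bar> < 1" | (c) "1 \<le> \<bar>\<eta>\<bar>" "1 \<le> \<bar>\<xi> - \<eta>\<bar>" by linarith
  then show ?thesis
  proof cases
    case a
    have "?L \<le> (2 powr (s + \<epsilon>) * (\<bar>\<eta>\<bar> powr (-\<sigma>) * japan (\<xi> - \<eta>) powr s)) * (F1 \<eta> * F2 (\<xi> - \<eta>))"
      unfolding eqL by (rule mult_right_mono[OF KA[OF par x2 a ne(1)] F12])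
    also have "\<dots> = ?A"
    proof -
      have "indicator {-1<..<1} \<eta> = (1::real)" using a by (auto simp: indicator_def abs_less_iff)
      then show ?thesis by (simp add: hA_def mult_ac)
    qed
    finally show ?thesis using B0 C0 by linarith
  next
    case b
    have ne': "\<xi> - \<eta> \<noteq> 0" using ne by simp
    have "?L = (japan \<xi> powr (s + \<epsilon>) * Kf \<sigma> \<xi> (\<xi> - \<eta>)) * (F1 \<eta> * F2 (\<xi> - \<eta>))"
      unfolding eqL Kf_sym ..
    also have "\<dots> \<le> (2 powr (s + \<epsilon>) * (\<bar>\<xi> - \<eta>\<bar> powr (-\<sigma>) * japan (\<xi> - (\<xi> - \<eta>)) powr s)) * (F1 \<eta> * F2 (\<xi> - \<eta>))"
      by (rule mult_right_mono[OF KA[OF par x2 b ne'] F12])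
    also have "\<dots> = ?B"
    proof -
      have "indicator {-1<..<1} (\<xi> - \<eta>) = (1::real)" using b by (auto simp: indicator_def abs_less_iff)
      then show ?thesis by (simp add: hA_def mult_ac)
    qed
    finally show ?thesis using A0 C0 by linarith
  next
    case c
    have "?L \<le> (2 powr (2 * s + \<epsilon>) * ((\<bar>\<eta>\<bar> powr (-(\<sigma> + s)) + \<bar>\<xi> - \<eta>\<bar> powr (-(\<sigma> + s))) * (japan \<eta> powr s * japan (\<xi> - \<eta>) powr s))) * (F1 \<eta> * F2 (\<xi> - \<eta>))"
      unfolding eqL by (rule mult_right_mono[OF KC[OF par x2 c] F12])
    also have "\<dots> = ?C" using c by (simp add: g1_def mult_ac)
    finally show ?thesis using A0 B0 by linarith
  qed
qed

lemma ennreal_mult3: fixes a b d :: real shows "0 \<le> a \<Longrightarrow> 0 \<le> b \<Longrightarrow> 0 \<le> d \<Longrightarrow> ennreal (a * (b * d)) = ennreal a * (ennreal b * ennreal d)"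
  by (simp add: ennreal_mult)

lemma conv_sq:
  fixes h a :: "real \<Rightarrow> real" and c :: real
  assumes [measurable]: "h \<in> borel_measurable borel" "a \<in> borel_measurable borel"
    and nn: "\<And>x. 0 \<le> h x" "\<And>x. 0 \<le> a x" "0 \<le> c"
  shows "(\<integral>\<^sup>+\<xi>. (\<integral>\<^sup>+\<eta>. ennreal (c * (h \<eta> * a (\<xi> - \<eta>))) \<partial>lborel)\<^sup>2 \<partial>lborel)
     \<le> ennreal (c\<^sup>2) * ((\<integral>\<^sup>+x. ennreal (h x) \<partial>lborel)\<^sup>2 * (\<integral>\<^sup>+x. (ennreal (a x))\<^sup>2 \<partial>lborel))"
proof -
  have eq: "(\<integral>\<^sup>+\<eta>. ennreal (c * (h \<eta> * a (\<xi> - \<eta>))) \<partial>lborel) = ennreal c * (\<integral>\<^sup>+\<eta>. ennreal (h \<eta>) * ennreal (a (\<xi> - \<eta>)) \<partial>lborel)" for \<xi>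
    using nn by (subst nn_integral_cmult[symmetric]) (auto simp: ennreal_mult)
  have "(\<integral>\<^sup>+\<xi>. (\<integral>\<^sup>+\<eta>. ennreal (c * (h \<eta> * a (\<xi> - \<eta>))) \<partial>lborel)\<^sup>2 \<partial>lborel)
     = (\<integral>\<^sup>+\<xi>. ennreal (c\<^sup>2) * (\<integral>\<^sup>+\<eta>. ennreal (h \<eta>) * ennreal (a (\<xi> - \<eta>)) \<partial>lborel)\<^sup>2 \<partial>lborel)"
    unfolding eq using nn by (simp add: power_mult_distrib ennreal_power)
  also have "\<dots> = ennreal (c\<^sup>2) * (\<integral>\<^sup>+\<xi>. (\<integral>\<^sup>+\<eta>. ennreal (h \<eta>) * ennreal (a (\<xi> - \<eta>)) \<partial>lborel)\<^sup>2 \<partial>lborel)"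
    by (rule nn_integral_cmult) measurable
  also have "\<dots> \<le> ennreal (c\<^sup>2) * ((\<integral>\<^sup>+x. ennreal (h x) \<partial>lborel)\<^sup>2 * (\<integral>\<^sup>+x. (ennreal (a x))\<^sup>2 \<partial>lborel))"
    by (intro mult_left_mono young[where h = "\<lambda>x. ennreal (h x)" and a = "\<lambda>x. ennreal (a x)"]) auto
  finally show ?thesis .
qed

lemma conv_swap:
  fixes u v :: "real \<Rightarrow> ennreal"
  assumes [measurable]: "u \<in> borel_measurable borel" "v \<in> borel_measurable borel"
  shows "(\<integral>\<^sup>+\<eta>. u (\<xi> - \<eta>) * v \<eta> \<partial>lborel) = (\<integral>\<^sup>+\<eta>. u \<eta> * v (\<xi> - \<eta>) \<partial>lborel)"
  using nn_transl[where b = "\<lambda>\<eta>. u (\<xi> - \<eta>) * v \<eta>" and c = \<xi>] by simp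

lemma gsum_sq:
  fixes g :: "real \<Rightarrow> real"
  assumes [measurable]: "g \<in> borel_measurable borel" and nn: "\<And>x. 0 \<le> g x"
  shows "(\<integral>\<^sup>+\<eta>. (ennreal (g \<eta> + g (\<xi> - \<eta>)))\<^sup>2 \<partial>lborel) \<le> 4 * (\<integral>\<^sup>+x. (ennreal (g x))\<^sup>2 \<partial>lborel)"
proof -
  have "(\<integral>\<^sup>+\<eta>. (ennreal (g \<eta> + g (\<xi> - \<eta>)))\<^sup>2 \<partial>lborel) \<le> (\<integral>\<^sup>+\<eta>. 2 * ((ennreal (g \<eta>))\<^sup>2 + (ennreal (g (\<xi> - \<eta>)))\<^sup>2) \<partial>lborel)"
  proof (intro nn_integral_mono)
    fix \<eta>
    have "ennreal (g \<eta> + g (\<xi> - \<eta>)) = ennreal (g \<eta>) + ennreal (g (\<xi> - \<eta>))" using nn by (simp add: ennreal_plus)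
    then show "(ennreal (g \<eta> + g (\<xi> - \<eta>)))\<^sup>2 \<le> 2 * ((ennreal (g \<eta>))\<^sup>2 + (ennreal (g (\<xi> - \<eta>)))\<^sup>2)"
      by (simp only:) (rule ennreal_sq2)
  qed
  also have "\<dots> = 2 * ((\<integral>\<^sup>+\<eta>. (ennreal (g \<eta>))\<^sup>2 \<partial>lborel) + (\<integral>\<^sup>+\<eta>. (ennreal (g (\<xi> - \<eta>)))\<^sup>2 \<partial>lborel))"
    by (simp add: nn_integral_cmult nn_integral_add)
  also have "(\<integral>\<^sup>+\<eta>. (ennreal (g (\<xi> - \<eta>)))\<^sup>2 \<partial>lborel) = (\<integral>\<^sup>+\<eta>. (ennreal (g \<eta>))\<^sup>2 \<partial>lborel)"
    by (rule nn_transl[where b = "\<lambda>x. (ennreal (g x))\<^sup>2"]) measurable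
  finally show ?thesis by (simp add: mult_2[symmetric] mult.assoc[symmetric])
qed

lemma convC_sq:
  fixes g a1 a2 :: "real \<Rightarrow> real" and c :: real
  assumes [measurable]: "g \<in> borel_measurable borel" "a1 \<in> borel_measurable borel" "a2 \<in> borel_measurable borel"
    and nn: "\<And>x. 0 \<le> g x" "\<And>x. 0 \<le> a1 x" "\<And>x. 0 \<le> a2 x" "0 \<le> c"
  shows "(\<integral>\<^sup>+\<xi>. (\<integral>\<^sup>+\<eta>. ennreal (c * ((g \<eta> + g (\<xi> - \<eta>)) * a1 \<eta> * a2 (\<xi> - \<eta>))) \<partial>lborel)\<^sup>2 \<partial>lborel)
     \<le> ennreal (c\<^sup>2) * (4 * (\<integral>\<^sup>+x. (ennreal (g x))\<^sup>2 \<partial>lborel)) * ((\<integral>\<^sup>+x. (ennreal (a1 x))\<^sup>2 \<partial>lborel) * (\<integral>\<^sup>+x. (ennreal (a2 x))\<^sup>2 \<partial>lborel))"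
proof -
  have pt: "(\<integral>\<^sup>+\<eta>. ennreal (c * ((g \<eta> + g (\<xi> - \<eta>)) * a1 \<eta> * a2 (\<xi> - \<eta>))) \<partial>lborel)\<^sup>2
     \<le> ennreal (c\<^sup>2) * (4 * (\<integral>\<^sup>+x. (ennreal (g x))\<^sup>2 \<partial>lborel)) * (\<integral>\<^sup>+\<eta>. (ennreal (a1 \<eta>))\<^sup>2 * (ennreal (a2 (\<xi> - \<eta>)))\<^sup>2 \<partial>lborel)" for \<xi>
  proof -
    have eq: "(\<integral>\<^sup>+\<eta>. ennreal (c * ((g \<eta> + g (\<xi> - \<eta>)) * a1 \<eta> * a2 (\<xi> - \<eta>))) \<partial>lborel)
       = ennreal c * (\<integral>\<^sup>+\<eta>. ennreal (g \<eta> + g (\<xi> - \<eta>)) * ennreal (a1 \<eta> * a2 (\<xi> - \<eta>)) \<partial>lborel)"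
    proof -
      have "(\<integral>\<^sup>+\<eta>. ennreal (c * ((g \<eta> + g (\<xi> - \<eta>)) * a1 \<eta> * a2 (\<xi> - \<eta>))) \<partial>lborel)
         = (\<integral>\<^sup>+\<eta>. ennreal c * (ennreal (g \<eta> + g (\<xi> - \<eta>)) * ennreal (a1 \<eta> * a2 (\<xi> - \<eta>))) \<partial>lborel)"
      proof (intro nn_integral_cong)
        fix \<eta>
        have "c * ((g \<eta> + g (\<xi> - \<eta>)) * a1 \<eta> * a2 (\<xi> - \<eta>)) = c * ((g \<eta> + g (\<xi> - \<eta>)) * (a1 \<eta> * a2 (\<xi> - \<eta>)))"
          by (simp add: mult.assoc)
        also have "ennreal \<dots> = ennreal c * (ennreal (g \<eta> + g (\<xi> - \<eta>)) * ennreal (a1 \<eta> * a2 (\<xi> - \<eta>)))"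
          using nn by (intro ennreal_mult3) (auto intro: add_nonneg_nonneg)
        finally show "ennreal (c * ((g \<eta> + g (\<xi> - \<eta>)) * a1 \<eta> * a2 (\<xi> - \<eta>))) = ennreal c * (ennreal (g \<eta> + g (\<xi> - \<eta>)) * ennreal (a1 \<eta> * a2 (\<xi> - \<eta>)))" .
      qed
      also have "\<dots> = ennreal c * (\<integral>\<^sup>+\<eta>. ennreal (g \<eta> + g (\<xi> - \<eta>)) * ennreal (a1 \<eta> * a2 (\<xi> - \<eta>)) \<partial>lborel)"
        by (rule nn_integral_cmult) measurable
      finally show ?thesis .
    qed
    have cs: "(\<integral>\<^sup>+\<eta>. ennreal (g \<eta> + g (\<xi> - \<eta>)) * ennreal (a1 \<eta> * a2 (\<xi> - \<eta>)) \<partial>lborel)\<^sup>2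
       \<le> (\<integral>\<^sup>+\<eta>. (ennreal (g \<eta> + g (\<xi> - \<eta>)))\<^sup>2 \<partial>lborel) * (\<integral>\<^sup>+\<eta>. (ennreal (a1 \<eta> * a2 (\<xi> - \<eta>)))\<^sup>2 \<partial>lborel)"
      by (rule Cauchy_Schwarz_nn_integral) measurable
    also have "\<dots> \<le> (4 * (\<integral>\<^sup>+x. (ennreal (g x))\<^sup>2 \<partial>lborel)) * (\<integral>\<^sup>+\<eta>. (ennreal (a1 \<eta> * a2 (\<xi> - \<eta>)))\<^sup>2 \<partial>lborel)"
      by (intro mult_right_mono gsum_sq) (auto simp: nn)
    also have "(\<integral>\<^sup>+\<eta>. (ennreal (a1 \<eta> * a2 (\<xi> - \<eta>)))\<^sup>2 \<partial>lborel) = (\<integral>\<^sup>+\<eta>. (ennreal (a1 \<eta>))\<^sup>2 * (ennreal (a2 (\<xi> - \<eta>)))\<^sup>2 \<partial>lborel)"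
      using nn by (simp add: ennreal_mult power_mult_distrib)
    finally have cs2: "(\<integral>\<^sup>+\<eta>. ennreal (g \<eta> + g (\<xi> - \<eta>)) * ennreal (a1 \<eta> * a2 (\<xi> - \<eta>)) \<partial>lborel)\<^sup>2 \<le> (4 * (\<integral>\<^sup>+x. (ennreal (g x))\<^sup>2 \<partial>lborel)) * (\<integral>\<^sup>+\<eta>. (ennreal (a1 \<eta>))\<^sup>2 * (ennreal (a2 (\<xi> - \<eta>)))\<^sup>2 \<partial>lborel)" .
    have "(ennreal c)\<^sup>2 = ennreal (c\<^sup>2)" using nn by (simp add: ennreal_power)
    then show ?thesis unfolding eq power_mult_distrib using mult_left_mono[OF cs2, of "ennreal (c\<^sup>2)"]
      by (simp add: mult.assoc)
  qed
  have "(\<integral>\<^sup>+\<xi>. (\<integral>\<^sup>+\<eta>. ennreal (c * ((g \<eta> + g (\<xi> - \<eta>)) * a1 \<eta> * a2 (\<xi> - \<eta>))) \<partial>lborel)\<^sup>2 \<partial>lborel)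
     \<le> (\<integral>\<^sup>+\<xi>. ennreal (c\<^sup>2) * (4 * (\<integral>\<^sup>+x. (ennreal (g x))\<^sup>2 \<partial>lborel)) * (\<integral>\<^sup>+\<eta>. (ennreal (a1 \<eta>))\<^sup>2 * (ennreal (a2 (\<xi> - \<eta>)))\<^sup>2 \<partial>lborel) \<partial>lborel)"
    by (intro nn_integral_mono pt)
  also have "\<dots> = ennreal (c\<^sup>2) * (4 * (\<integral>\<^sup>+x. (ennreal (g x))\<^sup>2 \<partial>lborel)) * (\<integral>\<^sup>+\<xi>. (\<integral>\<^sup>+\<eta>. (ennreal (a1 \<eta>))\<^sup>2 * (ennreal (a2 (\<xi> - \<eta>)))\<^sup>2 \<partial>lborel) \<partial>lborel)"
    by (rule nn_integral_cmult) measurable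
  also have "(\<integral>\<^sup>+\<xi>. (\<integral>\<^sup>+\<eta>. (ennreal (a1 \<eta>))\<^sup>2 * (ennreal (a2 (\<xi> - \<eta>)))\<^sup>2 \<partial>lborel) \<partial>lborel) = (\<integral>\<^sup>+x. (ennreal (a1 x))\<^sup>2 \<partial>lborel) * (\<integral>\<^sup>+x. (ennreal (a2 x))\<^sup>2 \<partial>lborel)"
    by (rule conv_total[where h = "\<lambda>x. (ennreal (a1 x))\<^sup>2" and b = "\<lambda>x. (ennreal (a2 x))\<^sup>2"]) measurable
  finally show ?thesis .
qed

lemma high_int:
  fixes F1 F2 :: "real \<Rightarrow> real"
  assumes par: "0 \<le> s" "0 \<le> \<epsilon>" "0 \<le> \<sigma>" "1 + \<epsilon> \<le> 2 * \<sigma>"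
    and [measurable]: "F1 \<in> borel_measurable borel" "F2 \<in> borel_measurable borel"
    and nn: "\<And>x. 0 \<le> F1 x" "\<And>x. 0 \<le> F2 x"
    and x2: "2 \<le> \<bar>\<xi>\<bar>"
  shows "ennreal (japan \<xi> powr (s + \<epsilon>)) * (\<integral>\<^sup>+\<eta>. ennreal (Kf \<sigma> \<xi> \<eta> * F1 \<eta> * F2 (\<xi> - \<eta>)) \<partial>lborel) \<le>
     (\<integral>\<^sup>+\<eta>. ennreal (2 powr (s + \<epsilon>) * (hA \<sigma> F1 \<eta> * (japan (\<xi> - \<eta>) powr s * F2 (\<xi> - \<eta>)))) \<partial>lborel)
   + (\<integral>\<^sup>+\<eta>. ennreal (2 powr (s + \<epsilon>) * (hA \<sigma> F2 (\<xi> - \<eta>) * (japan \<eta> powr s * F1 \<eta>))) \<partial>lborel)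
   + (\<integral>\<^sup>+\<eta>. ennreal (2 powr (2 * s + \<epsilon>) * ((g1 (\<sigma> + s) \<eta> + g1 (\<sigma> + s) (\<xi> - \<eta>)) * (japan \<eta> powr s * F1 \<eta>) * (japan (\<xi> - \<eta>) powr s * F2 (\<xi> - \<eta>)))) \<partial>lborel)"
proof -
  have "ennreal (japan \<xi> powr (s + \<epsilon>)) * (\<integral>\<^sup>+\<eta>. ennreal (Kf \<sigma> \<xi> \<eta> * F1 \<eta> * F2 (\<xi> - \<eta>)) \<partial>lborel)
     = (\<integral>\<^sup>+\<eta>. ennreal (japan \<xi> powr (s + \<epsilon>)) * ennreal (Kf \<sigma> \<xi> \<eta> * F1 \<eta> * F2 (\<xi> - \<eta>)) \<partial>lborel)"
    by (rule nn_integral_cmult[symmetric]) measurable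
  also have "\<dots> = (\<integral>\<^sup>+\<eta>. ennreal (japan \<xi> powr (s + \<epsilon>) * (Kf \<sigma> \<xi> \<eta> * F1 \<eta> * F2 (\<xi> - \<eta>))) \<partial>lborel)"
    using nn Kf_nonneg by (intro nn_integral_cong) (simp add: ennreal_mult)
  also have "\<dots> \<le> (\<integral>\<^sup>+\<eta>. ennreal (2 powr (s + \<epsilon>) * (hA \<sigma> F1 \<eta> * (japan (\<xi> - \<eta>) powr s * F2 (\<xi> - \<eta>))))
      + ennreal (2 powr (s + \<epsilon>) * (hA \<sigma> F2 (\<xi> - \<eta>) * (japan \<eta> powr s * F1 \<eta>)))
      + ennreal (2 powr (2 * s + \<epsilon>) * ((g1 (\<sigma> + s) \<eta> + g1 (\<sigma> + s) (\<xi> - \<eta>)) * (japan \<eta> powr s * F1 \<eta>) * (japan (\<xi> - \<eta>) powr s * F2 (\<xi> - \<eta>)))) \<partial>lborel)"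
  proof (rule nn_integral_mono_AE)
    have "AE \<eta> in lborel. \<eta> \<noteq> 0" by (rule AE_lborel_singleton)
    moreover have "AE \<eta> in lborel. \<eta> \<noteq> \<xi>" by (rule AE_lborel_singleton)
    ultimately show "AE \<eta> in lborel. ennreal (japan \<xi> powr (s + \<epsilon>) * (Kf \<sigma> \<xi> \<eta> * F1 \<eta> * F2 (\<xi> - \<eta>))) \<le>
      ennreal (2 powr (s + \<epsilon>) * (hA \<sigma> F1 \<eta> * (japan (\<xi> - \<eta>) powr s * F2 (\<xi> - \<eta>))))
      + ennreal (2 powr (s + \<epsilon>) * (hA \<sigma> F2 (\<xi> - \<eta>) * (japan \<eta> powr s * F1 \<eta>)))
      + ennreal (2 powr (2 * s + \<epsilon>) * ((g1 (\<sigma> + s) \<eta> + g1 (\<sigma> + s) (\<xi> - \<eta>)) * (japan \<eta> powr s * F1 \<eta>) * (japan (\<xi> - \<eta>) powr s * F2 (\<xi> - \<eta>))))"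
    proof eventually_elim
      case (elim \<eta>)
      have A0: "0 \<le> 2 powr (s + \<epsilon>) * (hA \<sigma> F1 \<eta> * (japan (\<xi> - \<eta>) powr s * F2 (\<xi> - \<eta>)))" using nn by (simp add: hA_nonneg)
      have B0: "0 \<le> 2 powr (s + \<epsilon>) * (hA \<sigma> F2 (\<xi> - \<eta>) * (japan \<eta> powr s * F1 \<eta>))" using nn by (simp add: hA_nonneg)
      have C0: "0 \<le> 2 powr (2 * s + \<epsilon>) * ((g1 (\<sigma> + s) \<eta> + g1 (\<sigma> + s) (\<xi> - \<eta>)) * (japan \<eta> powr s * F1 \<eta>) * (japan (\<xi> - \<eta>) powr s * F2 (\<xi> - \<eta>)))"
        using nn by (simp add: g1_nonneg)
      have "ennreal (japan \<xi> powr (s + \<epsilon>) * (Kf \<sigma> \<xi> \<eta> * F1 \<eta> * F2 (\<xi> - \<eta>))) \<le>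
        ennreal (2 powr (s + \<epsilon>) * (hA \<sigma> F1 \<eta> * (japan (\<xi> - \<eta>) powr s * F2 (\<xi> - \<eta>)))
      + 2 powr (s + \<epsilon>) * (hA \<sigma> F2 (\<xi> - \<eta>) * (japan \<eta> powr s * F1 \<eta>))
      + 2 powr (2 * s + \<epsilon>) * ((g1 (\<sigma> + s) \<eta> + g1 (\<sigma> + s) (\<xi> - \<eta>)) * (japan \<eta> powr s * F1 \<eta>) * (japan (\<xi> - \<eta>) powr s * F2 (\<xi> - \<eta>))))"
        by (rule ennreal_leI, rule pw_high[OF par x2 elim nn])
      also have "\<dots> = ennreal (2 powr (s + \<epsilon>) * (hA \<sigma> F1 \<eta> * (japan (\<xi> - \<eta>) powr s * F2 (\<xi> - \<eta>))))
      + ennreal (2 powr (s + \<epsilon>) * (hA \<sigma> F2 (\<xi> - \<eta>) * (japan \<eta> powr s * F1 \<eta>)))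
      + ennreal (2 powr (2 * s + \<epsilon>) * ((g1 (\<sigma> + s) \<eta> + g1 (\<sigma> + s) (\<xi> - \<eta>)) * (japan \<eta> powr s * F1 \<eta>) * (japan (\<xi> - \<eta>) powr s * F2 (\<xi> - \<eta>))))"
        using A0 B0 C0 by (simp add: ennreal_plus)
      finally show ?case .
    qed
  qed
  also have "\<dots> = (\<integral>\<^sup>+\<eta>. ennreal (2 powr (s + \<epsilon>) * (hA \<sigma> F1 \<eta> * (japan (\<xi> - \<eta>) powr s * F2 (\<xi> - \<eta>)))) \<partial>lborel)
   + (\<integral>\<^sup>+\<eta>. ennreal (2 powr (s + \<epsilon>) * (hA \<sigma> F2 (\<xi> - \<eta>) * (japan \<eta> powr s * F1 \<eta>))) \<partial>lborel)
   + (\<integral>\<^sup>+\<eta>. ennreal (2 powr (2 * s + \<epsilon>) * ((g1 (\<sigma> + s) \<eta> + g1 (\<sigma> + s) (\<xi> - \<eta>)) * (japan \<eta> powr s * F1 \<eta>) * (japan (\<xi> - \<eta>) powr s * F2 (\<xi> - \<eta>)))) \<partial>lborel)"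
    by (simp add: nn_integral_add)
  finally show ?thesis .
qed

lemma high_sq:
  fixes F1 F2 :: "real \<Rightarrow> real"
  assumes par: "0 \<le> s" "0 \<le> \<epsilon>" "0 \<le> \<sigma>" "1 + \<epsilon> \<le> 2 * \<sigma>"
    and [measurable]: "F1 \<in> borel_measurable borel" "F2 \<in> borel_measurable borel"
    and nn: "\<And>x. 0 \<le> F1 x" "\<And>x. 0 \<le> F2 x"
  shows "(\<integral>\<^sup>+\<xi>. (ennreal (japan \<xi> powr (s + \<epsilon>)) * (\<integral>\<^sup>+\<eta>. ennreal (Kf \<sigma> \<xi> \<eta> * F1 \<eta> * F2 (\<xi> - \<eta>)) \<partial>lborel))\<^sup>2 * indicator {\<xi>. 2 \<le> \<bar>\<xi>\<bar>} \<xi> \<partial>lborel)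
    \<le> 3 * (ennreal ((2 powr (s + \<epsilon>))\<^sup>2) * ((\<integral>\<^sup>+x. ennreal (hA \<sigma> F1 x) \<partial>lborel)\<^sup>2 * (\<integral>\<^sup>+x. (ennreal (japan x powr s * F2 x))\<^sup>2 \<partial>lborel))
       + ennreal ((2 powr (s + \<epsilon>))\<^sup>2) * ((\<integral>\<^sup>+x. ennreal (hA \<sigma> F2 x) \<partial>lborel)\<^sup>2 * (\<integral>\<^sup>+x. (ennreal (japan x powr s * F1 x))\<^sup>2 \<partial>lborel))
       + ennreal ((2 powr (2 * s + \<epsilon>))\<^sup>2) * (4 * (\<integral>\<^sup>+x. (ennreal (g1 (\<sigma> + s) x))\<^sup>2 \<partial>lborel)) * ((\<integral>\<^sup>+x. (ennreal (japan x powr s * F1 x))\<^sup>2 \<partial>lborel) * (\<integral>\<^sup>+x. (ennreal (japan x powr s * F2 x))\<^sup>2 \<partial>lborel)))"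
proof -
  define c1 where "c1 = 2 powr (s + \<epsilon>)"
  define c2 where "c2 = 2 powr (2 * s + \<epsilon>)"
  define a1 where "a1 = (\<lambda>x. japan x powr s * F1 x)"
  define a2 where "a2 = (\<lambda>x. japan x powr s * F2 x)"
  have [measurable]: "a1 \<in> borel_measurable borel" "a2 \<in> borel_measurable borel" unfolding a1_def a2_def by measurable
  have a1nn: "\<And>x. 0 \<le> a1 x" and a2nn: "\<And>x. 0 \<le> a2 x" unfolding a1_def a2_def using nn by auto
  have c1nn: "0 \<le> c1" and c2nn: "0 \<le> c2" unfolding c1_def c2_def by auto
  define QA where "QA = (\<lambda>\<xi>. \<integral>\<^sup>+\<eta>. ennreal (c1 * (hA \<sigma> F1 \<eta> * a2 (\<xi> - \<eta>))) \<partial>lborel)"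
  define QB where "QB = (\<lambda>\<xi>. \<integral>\<^sup>+\<eta>. ennreal (c1 * (hA \<sigma> F2 \<eta> * a1 (\<xi> - \<eta>))) \<partial>lborel)"
  define QC where "QC = (\<lambda>\<xi>. \<integral>\<^sup>+\<eta>. ennreal (c2 * ((g1 (\<sigma> + s) \<eta> + g1 (\<sigma> + s) (\<xi> - \<eta>)) * a1 \<eta> * a2 (\<xi> - \<eta>))) \<partial>lborel)"
  have [measurable]: "QA \<in> borel_measurable borel" "QB \<in> borel_measurable borel" "QC \<in> borel_measurable borel"
    unfolding QA_def QB_def QC_def by measurable
  have QBeq: "(\<integral>\<^sup>+\<eta>. ennreal (c1 * (hA \<sigma> F2 (\<xi> - \<eta>) * a1 \<eta>)) \<partial>lborel) = QB \<xi>" for \<xi>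
    unfolding QB_def
    using nn_transl[where b = "\<lambda>\<eta>. ennreal (c1 * (hA \<sigma> F2 (\<xi> - \<eta>) * a1 \<eta>))" and c = \<xi>] by simp
  have pt: "(ennreal (japan \<xi> powr (s + \<epsilon>)) * (\<integral>\<^sup>+\<eta>. ennreal (Kf \<sigma> \<xi> \<eta> * F1 \<eta> * F2 (\<xi> - \<eta>)) \<partial>lborel))\<^sup>2 * indicator {\<xi>. 2 \<le> \<bar>\<xi>\<bar>} \<xi>
      \<le> 3 * ((QA \<xi>)\<^sup>2 + (QB \<xi>)\<^sup>2 + (QC \<xi>)\<^sup>2)" for \<xi>
  proof (cases "2 \<le> \<bar>\<xi>\<bar>")
    case True
    have "ennreal (japan \<xi> powr (s + \<epsilon>)) * (\<integral>\<^sup>+\<eta>. ennreal (Kf \<sigma> \<xi> \<eta> * F1 \<eta> * F2 (\<xi> - \<eta>)) \<partial>lborel) \<le> QA \<xi> + QB \<xi> + QC \<xi>"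
      using high_int[OF par assms(5,6) nn True] unfolding QA_def QBeq[symmetric] QC_def c1_def c2_def a1_def a2_def .
    then have "(ennreal (japan \<xi> powr (s + \<epsilon>)) * (\<integral>\<^sup>+\<eta>. ennreal (Kf \<sigma> \<xi> \<eta> * F1 \<eta> * F2 (\<xi> - \<eta>)) \<partial>lborel))\<^sup>2 \<le> (QA \<xi> + QB \<xi> + QC \<xi>)\<^sup>2"
      by (rule power_mono) simp
    also have "\<dots> \<le> 3 * ((QA \<xi>)\<^sup>2 + (QB \<xi>)\<^sup>2 + (QC \<xi>)\<^sup>2)" by (rule ennreal_sq3)
    finally show ?thesis using True by simp
  qed simp
  have "(\<integral>\<^sup>+\<xi>. (ennreal (japan \<xi> powr (s + \<epsilon>)) * (\<integral>\<^sup>+\<eta>. ennreal (Kf \<sigma> \<xi> \<eta> * F1 \<eta> * F2 (\<xi> - \<eta>)) \<partial>lborel))\<^sup>2 * indicator {\<xi>. 2 \<le> \<bar>\<xi>\<bar>} \<xi> \<partial>lborel)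
    \<le> (\<integral>\<^sup>+\<xi>. 3 * ((QA \<xi>)\<^sup>2 + (QB \<xi>)\<^sup>2 + (QC \<xi>)\<^sup>2) \<partial>lborel)"
    by (intro nn_integral_mono pt)
  also have "\<dots> = 3 * ((\<integral>\<^sup>+\<xi>. (QA \<xi>)\<^sup>2 \<partial>lborel) + (\<integral>\<^sup>+\<xi>. (QB \<xi>)\<^sup>2 \<partial>lborel) + (\<integral>\<^sup>+\<xi>. (QC \<xi>)\<^sup>2 \<partial>lborel))"
    by (simp add: nn_integral_cmult nn_integral_add)
  also have "\<dots> \<le> 3 * (ennreal (c1\<^sup>2) * ((\<integral>\<^sup>+x. ennreal (hA \<sigma> F1 x) \<partial>lborel)\<^sup>2 * (\<integral>\<^sup>+x. (ennreal (a2 x))\<^sup>2 \<partial>lborel))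
       + ennreal (c1\<^sup>2) * ((\<integral>\<^sup>+x. ennreal (hA \<sigma> F2 x) \<partial>lborel)\<^sup>2 * (\<integral>\<^sup>+x. (ennreal (a1 x))\<^sup>2 \<partial>lborel))
       + ennreal (c2\<^sup>2) * (4 * (\<integral>\<^sup>+x. (ennreal (g1 (\<sigma> + s) x))\<^sup>2 \<partial>lborel)) * ((\<integral>\<^sup>+x. (ennreal (a1 x))\<^sup>2 \<partial>lborel) * (\<integral>\<^sup>+x. (ennreal (a2 x))\<^sup>2 \<partial>lborel)))"
  proof (intro mult_left_mono add_mono)
    show "(\<integral>\<^sup>+\<xi>. (QA \<xi>)\<^sup>2 \<partial>lborel) \<le> ennreal (c1\<^sup>2) * ((\<integral>\<^sup>+x. ennreal (hA \<sigma> F1 x) \<partial>lborel)\<^sup>2 * (\<integral>\<^sup>+x. (ennreal (a2 x))\<^sup>2 \<partial>lborel))"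
      unfolding QA_def by (rule conv_sq) (use nn a2nn c1nn hA_nonneg in auto)
    show "(\<integral>\<^sup>+\<xi>. (QB \<xi>)\<^sup>2 \<partial>lborel) \<le> ennreal (c1\<^sup>2) * ((\<integral>\<^sup>+x. ennreal (hA \<sigma> F2 x) \<partial>lborel)\<^sup>2 * (\<integral>\<^sup>+x. (ennreal (a1 x))\<^sup>2 \<partial>lborel))"
      unfolding QB_def by (rule conv_sq) (use nn a1nn c1nn hA_nonneg in auto)
    show "(\<integral>\<^sup>+\<xi>. (QC \<xi>)\<^sup>2 \<partial>lborel) \<le> ennreal (c2\<^sup>2) * (4 * (\<integral>\<^sup>+x. (ennreal (g1 (\<sigma> + s) x))\<^sup>2 \<partial>lborel)) * ((\<integral>\<^sup>+x. (ennreal (a1 x))\<^sup>2 \<partial>lborel) * (\<integral>\<^sup>+x. (ennreal (a2 x))\<^sup>2 \<partial>lborel))"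
      unfolding QC_def by (rule convC_sq) (use a1nn a2nn c2nn g1_nonneg in auto)
  qed simp
  finally show ?thesis unfolding c1_def c2_def a1_def a2_def .
qed

lemma japan_powr_sq: "japan x powr (2 * r) = (japan x powr r)\<^sup>2"
proof -
  have "japan x powr (2 * r) = japan x powr (r + r)" by simp
  also have "\<dots> = japan x powr r * japan x powr r" by (rule powr_add)
  finally show ?thesis by (simp add: power2_eq_square)
qed

lemma sob_eq: "sob_int r f = (\<integral>\<^sup>+x. (ennreal (japan x powr r * cmod (f x)))\<^sup>2 \<partial>lborel)"
  unfolding sob_int_def
  by (intro nn_integral_cong) (simp add: ennreal_power power_mult_distrib japan_powr_sq)

lemma L2_le_sob:
  assumes "0 \<le> s"
  shows "(\<integral>\<^sup>+x. (ennreal (cmod (f x)))\<^sup>2 \<partial>lborel) \<le> sob_int s f"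
  unfolding sob_int_def
proof (intro nn_integral_mono)
  fix x
  have "1 \<le> japan x powr (2 * s)" using japan_ge1 assms by (simp add: ge_one_powr_ge_zero)
  then have "(cmod (f x))\<^sup>2 \<le> japan x powr (2 * s) * (cmod (f x))\<^sup>2"
    by (simp add: mult_le_cancel_right1)
  then show "(ennreal (cmod (f x)))\<^sup>2 \<le> ennreal (japan x powr (2 * s) * (cmod (f x))\<^sup>2)"
    by (simp add: ennreal_power ennreal_leI)
qed

lemma T_measurable:
  assumes [measurable]: "f1 \<in> borel_measurable borel" "f2 \<in> borel_measurable borel"
  shows "T_sigma \<sigma> f1 f2 \<in> borel_measurable borel"
proof -
  have M: "(\<lambda>(\<xi>, \<eta>). complex_of_real (\<xi> / japan (kdv_phase \<xi> \<eta> (\<xi> - \<eta>)) powr \<sigma>) * f1 \<eta> * f2 (\<xi> - \<eta>)) \<in> borel_measurable (lborel \<Otimes>\<^sub>M lborel)"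
    unfolding kdv_phase_def by measurable
  have "(\<lambda>\<xi>. \<integral>\<eta>. complex_of_real (\<xi> / japan (kdv_phase \<xi> \<eta> (\<xi> - \<eta>)) powr \<sigma>) * f1 \<eta> * f2 (\<xi> - \<eta>) \<partial>lborel) \<in> borel_measurable lborel"
    by (rule lborel.borel_measurable_lebesgue_integral[OF M])
  then show ?thesis unfolding T_sigma_def by simp
qed

lemma sob_T_bound:
  shows "sob_int r (T_sigma \<sigma> f1 f2) \<le> (\<integral>\<^sup>+\<xi>. (ennreal (japan \<xi> powr r) * (\<integral>\<^sup>+\<eta>. ennreal (Kf \<sigma> \<xi> \<eta> * cmod (f1 \<eta>) * cmod (f2 (\<xi> - \<eta>))) \<partial>lborel))\<^sup>2 \<partial>lborel)"
  unfolding sob_eq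
proof (intro nn_integral_mono power_mono)
  fix \<xi>
  show "ennreal (japan \<xi> powr r * cmod (T_sigma \<sigma> f1 f2 \<xi>)) \<le> ennreal (japan \<xi> powr r) * (\<integral>\<^sup>+\<eta>. ennreal (Kf \<sigma> \<xi> \<eta> * cmod (f1 \<eta>) * cmod (f2 (\<xi> - \<eta>))) \<partial>lborel)"
    by (simp add: ennreal_mult mult_left_mono T_bound)
qed simp

lemma low_bound:
  fixes F1 F2 :: "real \<Rightarrow> real"
  assumes [measurable]: "F1 \<in> borel_measurable borel" "F2 \<in> borel_measurable borel"
    and nn: "\<And>x. 0 \<le> F1 x" "\<And>x. 0 \<le> F2 x" and "0 \<le> \<sigma>" "0 \<le> r"
  shows "(\<integral>\<^sup>+\<xi>. (ennreal (japan \<xi> powr r) * (\<integral>\<^sup>+\<eta>. ennreal (Kf \<sigma> \<xi> \<eta> * F1 \<eta> * F2 (\<xi> - \<eta>)) \<partial>lborel))\<^sup>2 * indicator {\<xi>. \<bar>\<xi>\<bar> < 2} \<xi> \<partial>lborel)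
    \<le> ennreal (16 * 9 powr r) * ((\<integral>\<^sup>+x. (ennreal (F1 x))\<^sup>2 \<partial>lborel) * (\<integral>\<^sup>+x. (ennreal (F2 x))\<^sup>2 \<partial>lborel))"
proof -
  define A where "A = (\<integral>\<^sup>+x. (ennreal (F1 x))\<^sup>2 \<partial>lborel) * (\<integral>\<^sup>+x. (ennreal (F2 x))\<^sup>2 \<partial>lborel)"
  have pt: "(ennreal (japan \<xi> powr r) * (\<integral>\<^sup>+\<eta>. ennreal (Kf \<sigma> \<xi> \<eta> * F1 \<eta> * F2 (\<xi> - \<eta>)) \<partial>lborel))\<^sup>2 * indicator {\<xi>. \<bar>\<xi>\<bar> < 2} \<xi>
      \<le> (ennreal (4 * 9 powr r) * A) * indicator {-2<..<(2::real)} \<xi>" for \<xi>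
  proof (cases "\<bar>\<xi>\<bar> < 2")
    case True
    have w: "japan \<xi> powr r \<le> 3 powr r" using japan_le3[of \<xi>] True japan_pos[of \<xi>] assms(6)
      by (intro powr_mono2) auto
    have w2: "(japan \<xi> powr r)\<^sup>2 \<le> 9 powr r"
    proof -
      have "(japan \<xi> powr r)\<^sup>2 \<le> (3 powr r)\<^sup>2" using w by (intro power_mono) auto
      also have "(3 powr r)\<^sup>2 = (9::real) powr r" by (simp add: power2_eq_square powr_mult[symmetric])
      finally show ?thesis .
    qed
    have x2: "\<xi>\<^sup>2 \<le> 4" using True by (metis abs_le_square_iff abs_numeral less_imp_le power2_eq_square real_sqrt_four real_sqrt_pow2 zero_le_numeral)
    have "(ennreal (japan \<xi> powr r) * (\<integral>\<^sup>+\<eta>. ennreal (Kf \<sigma> \<xi> \<eta> * F1 \<eta> * F2 (\<xi> - \<eta>)) \<partial>lborel))\<^sup>2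
       = ennreal ((japan \<xi> powr r)\<^sup>2) * (\<integral>\<^sup>+\<eta>. ennreal (Kf \<sigma> \<xi> \<eta> * F1 \<eta> * F2 (\<xi> - \<eta>)) \<partial>lborel)\<^sup>2"
      by (simp add: power_mult_distrib ennreal_power)
    also have "\<dots> \<le> ennreal (9 powr r) * (ennreal (\<xi>\<^sup>2) * A)"
      unfolding A_def by (intro mult_mono ennreal_leI w2 P_L2) (auto simp: nn assms)
    also have "\<dots> \<le> ennreal (9 powr r) * (ennreal 4 * A)"
      using x2 by (intro mult_left_mono mult_right_mono ennreal_leI) auto
    also have "\<dots> = ennreal (4 * 9 powr r) * A" by (simp add: ennreal_mult mult_ac)
    finally show ?thesis using True by (simp add: indicator_def abs_less_iff)
  qed simp
  have "(\<integral>\<^sup>+\<xi>. (ennreal (japan \<xi> powr r) * (\<integral>\<^sup>+\<eta>. ennreal (Kf \<sigma> \<xi> \<eta> * F1 \<eta> * F2 (\<xi> - \<eta>)) \<partial>lborel))\<^sup>2 * indicator {\<xi>. \<bar>\<xi>\<bar> < 2} \<xi> \<partial>lborel)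
     \<le> (\<integral>\<^sup>+\<xi>. (ennreal (4 * 9 powr r) * A) * indicator {-2<..<(2::real)} \<xi> \<partial>lborel)"
    by (intro nn_integral_mono pt)
  also have "\<dots> = ennreal (4 * 9 powr r) * A * 4"
    by (subst nn_integral_cmult_indicator) auto
  also have "\<dots> = ennreal (16 * 9 powr r) * A" by (simp add: ennreal_mult mult_ac)
  finally show ?thesis unfolding A_def .
qed

lemma loc_T:
  assumes [measurable]: "f1 \<in> borel_measurable borel" "f2 \<in> borel_measurable borel"
    and "0 \<le> \<sigma>" "0 < lam"
    and A1: "(\<integral>\<^sup>+x. (ennreal (cmod (f1 x)))\<^sup>2 \<partial>lborel) \<le> ennreal s1"
    and A2: "(\<integral>\<^sup>+x. (ennreal (cmod (f2 x)))\<^sup>2 \<partial>lborel) \<le> ennreal s2"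
    and "0 \<le> s1" "0 \<le> s2"
  shows "loc_int lam (T_sigma \<sigma> f1 f2) \<le> ennreal (2 * sqrt (s1 * s2) powr lam)"
proof -
  have pt: "ennreal (cmod (T_sigma \<sigma> f1 f2 x) powr lam) * indicator {-1<..<1} x \<le> ennreal (sqrt (s1 * s2) powr lam) * indicator {-1<..<(1::real)} x" for x
  proof (cases "x \<in> {-1<..<1}")
    case True
    then have x1: "x\<^sup>2 \<le> 1" by (auto simp: abs_square_le_1)
    have "(ennreal (cmod (T_sigma \<sigma> f1 f2 x)))\<^sup>2 \<le> (\<integral>\<^sup>+\<eta>. ennreal (Kf \<sigma> x \<eta> * cmod (f1 \<eta>) * cmod (f2 (x - \<eta>))) \<partial>lborel)\<^sup>2"
      by (intro power_mono T_bound) simp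
    also have "\<dots> \<le> ennreal (x\<^sup>2) * ((\<integral>\<^sup>+x. (ennreal (cmod (f1 x)))\<^sup>2 \<partial>lborel) * (\<integral>\<^sup>+x. (ennreal (cmod (f2 x)))\<^sup>2 \<partial>lborel))"
      by (rule P_L2) (use assms in auto)
    also have "\<dots> \<le> ennreal 1 * (ennreal s1 * ennreal s2)"
      using x1 A1 A2 by (intro mult_mono ennreal_leI) auto
    also have "\<dots> = ennreal (s1 * s2)" using assms by (simp add: ennreal_mult)
    finally have "ennreal ((cmod (T_sigma \<sigma> f1 f2 x))\<^sup>2) \<le> ennreal (s1 * s2)" by (simp add: ennreal_power)
    then have "(cmod (T_sigma \<sigma> f1 f2 x))\<^sup>2 \<le> s1 * s2" using assms by (simp add: ennreal_le_iff)
    then have "cmod (T_sigma \<sigma> f1 f2 x) \<le> sqrt (s1 * s2)" by (rule real_le_rsqrt)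
    then have "cmod (T_sigma \<sigma> f1 f2 x) powr lam \<le> sqrt (s1 * s2) powr lam" using assms by (intro powr_mono2) auto
    then show ?thesis using True by (simp add: ennreal_leI)
  qed simp
  have "loc_int lam (T_sigma \<sigma> f1 f2) \<le> (\<integral>\<^sup>+x. ennreal (sqrt (s1 * s2) powr lam) * indicator {-1<..<(1::real)} x \<partial>lborel)"
    unfolding loc_int_def by (intro nn_integral_mono pt)
  also have "\<dots> = ennreal (sqrt (s1 * s2) powr lam) * 2"
    by (subst nn_integral_cmult_indicator) auto
  also have "\<dots> = ennreal (2 * sqrt (s1 * s2) powr lam)" by (simp add: ennreal_mult mult.commute)
  finally show ?thesis .
qed

lemma Dint_bound:
  assumes "0 \<le> \<sigma>" "0 < q" "\<sigma> * q < 1"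
  shows "(\<integral>\<^sup>+x\<in>{-1<..<1}. ennreal ((\<bar>x\<bar> powr (-\<sigma>)) powr q) \<partial>lborel) \<le> ennreal (2 / (1 - \<sigma> * q))"
proof -
  have "(\<integral>\<^sup>+x\<in>{-1<..<1}. ennreal ((\<bar>x\<bar> powr (-\<sigma>)) powr q) \<partial>lborel) = (\<integral>\<^sup>+x. ennreal (\<bar>x\<bar> powr (-(\<sigma> * q))) * indicator {-1<..<1} x \<partial>lborel)"
    by (intro nn_integral_cong) (simp add: powr_powr)
  also have "\<dots> \<le> ennreal (2 / (1 - \<sigma> * q))" by (rule int_sing) (use assms in auto)
  finally show ?thesis .
qed

lemma hA_bound:
  fixes F :: "real \<Rightarrow> real"
  assumes [measurable]: "F \<in> borel_measurable borel" and nn: "\<And>x. 0 \<le> F x"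
    and pq: "lam > 1" "q > 1" "1/lam + 1/q = 1"
    and LF: "(\<integral>\<^sup>+x\<in>{-1<..<1}. ennreal (F x powr lam) \<partial>lborel) = ennreal l" "0 \<le> l"
    and DW: "(\<integral>\<^sup>+x\<in>{-1<..<1}. ennreal ((\<bar>x\<bar> powr (-\<sigma>)) powr q) \<partial>lborel) = ennreal d" "0 \<le> d"
  shows "(\<integral>\<^sup>+x. ennreal (hA \<sigma> F x) \<partial>lborel) \<le> ennreal (l powr (1/lam) * d powr (1/q))"
proof -
  have "(\<integral>\<^sup>+x. ennreal (hA \<sigma> F x) \<partial>lborel) = (\<integral>\<^sup>+x\<in>{-1<..<1}. ennreal (F x * \<bar>x\<bar> powr (-\<sigma>)) \<partial>lborel)"
    by (intro nn_integral_cong) (simp add: hA_def mult.commute split: split_indicator)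
  also have "\<dots> \<le> ennreal (l powr (1/lam) * d powr (1/q))"
    by (rule holder_set[OF _ _ _ nn _ pq LF DW]) auto
  finally show ?thesis .
qed

lemma E_bound:
  assumes "1/2 < p"
  shows "(\<integral>\<^sup>+x. (ennreal (g1 p x))\<^sup>2 \<partial>lborel) \<le> ennreal (2 / (2 * p - 1))"
proof -
  have "(\<integral>\<^sup>+x. (ennreal (g1 p x))\<^sup>2 \<partial>lborel) = (\<integral>\<^sup>+x. ennreal (\<bar>x\<bar> powr (-(2 * p))) * indicator {x. 1 \<le> \<bar>x\<bar>} x \<partial>lborel)"
  proof (intro nn_integral_cong)
    fix x
    have "(\<bar>x\<bar> powr (-p))\<^sup>2 = \<bar>x\<bar> powr (-(2 * p))"
      by (simp add: power2_eq_square powr_add[symmetric])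
    then show "(ennreal (g1 p x))\<^sup>2 = ennreal (\<bar>x\<bar> powr (-(2 * p))) * indicator {x. 1 \<le> \<bar>x\<bar>} x"
      by (simp add: g1_def ennreal_power split: split_indicator)
  qed
  also have "\<dots> \<le> ennreal (2 / (2 * p - 1))" by (rule int_tail) (use assms in auto)
  finally show ?thesis .
qed

lemma ennreal_comb:
  fixes k1 k2 h1 h2 s1 s2 e :: real
  assumes "0 \<le> k1" "0 \<le> k2" "0 \<le> h1" "0 \<le> h2" "0 \<le> s1" "0 \<le> s2" "0 \<le> e"
  shows "3 * (ennreal k1 * ((ennreal h1)\<^sup>2 * ennreal s2) + ennreal k1 * ((ennreal h2)\<^sup>2 * ennreal s1)
      + ennreal k2 * (4 * ennreal e) * (ennreal s1 * ennreal s2))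
    = ennreal (3 * (k1 * (h1\<^sup>2 * s2) + k1 * (h2\<^sup>2 * s1) + k2 * (4 * e) * (s1 * s2)))"
  using assms by (simp add: ennreal_mult ennreal_power mult_ac)

lemma split_ind:
  fixes X :: "real \<Rightarrow> ennreal"
  assumes [measurable]: "X \<in> borel_measurable borel"
  shows "(\<integral>\<^sup>+\<xi>. X \<xi> \<partial>lborel) = (\<integral>\<^sup>+\<xi>. X \<xi> * indicator {\<xi>. \<bar>\<xi>\<bar> < 2} \<xi> \<partial>lborel) + (\<integral>\<^sup>+\<xi>. X \<xi> * indicator {\<xi>. 2 \<le> \<bar>\<xi>\<bar>} \<xi> \<partial>lborel)"
proof -
  have "(\<integral>\<^sup>+\<xi>. X \<xi> \<partial>lborel) = (\<integral>\<^sup>+\<xi>. X \<xi> * indicator {\<xi>. \<bar>\<xi>\<bar> < 2} \<xi> + X \<xi> * indicator {\<xi>. 2 \<le> \<bar>\<xi>\<bar>} \<xi> \<partial>lborel)"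
    by (intro nn_integral_cong) (auto split: split_indicator)
  also have "\<dots> = (\<integral>\<^sup>+\<xi>. X \<xi> * indicator {\<xi>. \<bar>\<xi>\<bar> < 2} \<xi> \<partial>lborel) + (\<integral>\<^sup>+\<xi>. X \<xi> * indicator {\<xi>. 2 \<le> \<bar>\<xi>\<bar>} \<xi> \<partial>lborel)"
    by (rule nn_integral_add) measurable
  finally show ?thesis .
qed

lemma sob_main:
  fixes f1 f2 :: "real \<Rightarrow> complex"
  assumes par: "0 \<le> s" "0 \<le> \<epsilon>" "0 \<le> \<sigma>" "1 + \<epsilon> \<le> 2 * \<sigma>"
    and [measurable]: "f1 \<in> borel_measurable borel" "f2 \<in> borel_measurable borel"
    and S1: "sob_int s f1 = ennreal s1" "0 \<le> s1" and S2: "sob_int s f2 = ennreal s2" "0 \<le> s2"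
    and H1: "(\<integral>\<^sup>+x. ennreal (hA \<sigma> (\<lambda>x. cmod (f1 x)) x) \<partial>lborel) \<le> ennreal h1" "0 \<le> h1"
    and H2: "(\<integral>\<^sup>+x. ennreal (hA \<sigma> (\<lambda>x. cmod (f2 x)) x) \<partial>lborel) \<le> ennreal h2" "0 \<le> h2"
    and E: "(\<integral>\<^sup>+x. (ennreal (g1 (\<sigma> + s) x))\<^sup>2 \<partial>lborel) \<le> ennreal e" "0 \<le> e"
  shows "sob_int (s + \<epsilon>) (T_sigma \<sigma> f1 f2) \<le> ennreal (16 * 9 powr (s + \<epsilon>) * (s1 * s2)
     + 3 * ((2 powr (s + \<epsilon>))\<^sup>2 * (h1\<^sup>2 * s2) + (2 powr (s + \<epsilon>))\<^sup>2 * (h2\<^sup>2 * s1) + (2 powr (2 * s + \<epsilon>))\<^sup>2 * (4 * e) * (s1 * s2)))"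
proof -
  define F1 where "F1 = (\<lambda>x. cmod (f1 x))"
  define F2 where "F2 = (\<lambda>x. cmod (f2 x))"
  have [measurable]: "F1 \<in> borel_measurable borel" "F2 \<in> borel_measurable borel" unfolding F1_def F2_def by measurable
  have nn: "\<And>x. 0 \<le> F1 x" "\<And>x. 0 \<le> F2 x" unfolding F1_def F2_def by auto
  define X where "X = (\<lambda>\<xi>. (ennreal (japan \<xi> powr (s + \<epsilon>)) * (\<integral>\<^sup>+\<eta>. ennreal (Kf \<sigma> \<xi> \<eta> * F1 \<eta> * F2 (\<xi> - \<eta>)) \<partial>lborel))\<^sup>2)"
  have [measurable]: "X \<in> borel_measurable borel" unfolding X_def by measurable
  have A1: "(\<integral>\<^sup>+x. (ennreal (F1 x))\<^sup>2 \<partial>lborel) \<le> ennreal s1" unfolding F1_def S1(1)[symmetric] by (rule L2_le_sob[OF par(1)])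
  have A2: "(\<integral>\<^sup>+x. (ennreal (F2 x))\<^sup>2 \<partial>lborel) \<le> ennreal s2" unfolding F2_def S2(1)[symmetric] by (rule L2_le_sob[OF par(1)])
  have S1': "(\<integral>\<^sup>+x. (ennreal (japan x powr s * F1 x))\<^sup>2 \<partial>lborel) = ennreal s1" unfolding F1_def S1(1)[symmetric] sob_eq ..
  have S2': "(\<integral>\<^sup>+x. (ennreal (japan x powr s * F2 x))\<^sup>2 \<partial>lborel) = ennreal s2" unfolding F2_def S2(1)[symmetric] sob_eq ..
  have "sob_int (s + \<epsilon>) (T_sigma \<sigma> f1 f2) \<le> (\<integral>\<^sup>+\<xi>. X \<xi> \<partial>lborel)"
    unfolding X_def F1_def F2_def by (rule sob_T_bound)
  also have "\<dots> = (\<integral>\<^sup>+\<xi>. X \<xi> * indicator {\<xi>. \<bar>\<xi>\<bar> < 2} \<xi> \<partial>lborel) + (\<integral>\<^sup>+\<xi>. X \<xi> * indicator {\<xi>. 2 \<le> \<bar>\<xi>\<bar>} \<xi> \<partial>lborel)"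
    by (rule split_ind) measurable
  also have "\<dots> \<le> ennreal (16 * 9 powr (s + \<epsilon>) * (s1 * s2))
     + ennreal (3 * ((2 powr (s + \<epsilon>))\<^sup>2 * (h1\<^sup>2 * s2) + (2 powr (s + \<epsilon>))\<^sup>2 * (h2\<^sup>2 * s1) + (2 powr (2 * s + \<epsilon>))\<^sup>2 * (4 * e) * (s1 * s2)))"
  proof (rule add_mono)
    have "(\<integral>\<^sup>+\<xi>. X \<xi> * indicator {\<xi>. \<bar>\<xi>\<bar> < 2} \<xi> \<partial>lborel) \<le> ennreal (16 * 9 powr (s + \<epsilon>)) * ((\<integral>\<^sup>+x. (ennreal (F1 x))\<^sup>2 \<partial>lborel) * (\<integral>\<^sup>+x. (ennreal (F2 x))\<^sup>2 \<partial>lborel))"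
      unfolding X_def by (rule low_bound) (use nn par in auto)
    also have "\<dots> \<le> ennreal (16 * 9 powr (s + \<epsilon>)) * (ennreal s1 * ennreal s2)"
      using A1 A2 by (intro mult_left_mono mult_mono) auto
    also have "\<dots> = ennreal (16 * 9 powr (s + \<epsilon>) * (s1 * s2))" using S1 S2 by (simp add: ennreal_mult)
    finally show "(\<integral>\<^sup>+\<xi>. X \<xi> * indicator {\<xi>. \<bar>\<xi>\<bar> < 2} \<xi> \<partial>lborel) \<le> ennreal (16 * 9 powr (s + \<epsilon>) * (s1 * s2))" .
  next
    have "(\<integral>\<^sup>+\<xi>. X \<xi> * indicator {\<xi>. 2 \<le> \<bar>\<xi>\<bar>} \<xi> \<partial>lborel) \<le>
      3 * (ennreal ((2 powr (s + \<epsilon>))\<^sup>2) * ((\<integral>\<^sup>+x. ennreal (hA \<sigma> F1 x) \<partial>lborel)\<^sup>2 * (\<integral>\<^sup>+x. (ennreal (japan x powr s * F2 x))\<^sup>2 \<partial>lborel))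
       + ennreal ((2 powr (s + \<epsilon>))\<^sup>2) * ((\<integral>\<^sup>+x. ennreal (hA \<sigma> F2 x) \<partial>lborel)\<^sup>2 * (\<integral>\<^sup>+x. (ennreal (japan x powr s * F1 x))\<^sup>2 \<partial>lborel))
       + ennreal ((2 powr (2 * s + \<epsilon>))\<^sup>2) * (4 * (\<integral>\<^sup>+x. (ennreal (g1 (\<sigma> + s) x))\<^sup>2 \<partial>lborel)) * ((\<integral>\<^sup>+x. (ennreal (japan x powr s * F1 x))\<^sup>2 \<partial>lborel) * (\<integral>\<^sup>+x. (ennreal (japan x powr s * F2 x))\<^sup>2 \<partial>lborel)))"
      unfolding X_def by (rule high_sq[OF par]) (use nn in auto)
    also have "\<dots> \<le> 3 * (ennreal ((2 powr (s + \<epsilon>))\<^sup>2) * ((ennreal h1)\<^sup>2 * ennreal s2) + ennreal ((2 powr (s + \<epsilon>))\<^sup>2) * ((ennreal h2)\<^sup>2 * ennreal s1)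
      + ennreal ((2 powr (2 * s + \<epsilon>))\<^sup>2) * (4 * ennreal e) * (ennreal s1 * ennreal s2))"
      unfolding S1' S2' using H1(1) H2(1) E(1) unfolding F1_def F2_def
      by (intro mult_left_mono add_mono mult_mono power_mono) auto
    also have "\<dots> = ennreal (3 * ((2 powr (s + \<epsilon>))\<^sup>2 * (h1\<^sup>2 * s2) + (2 powr (s + \<epsilon>))\<^sup>2 * (h2\<^sup>2 * s1) + (2 powr (2 * s + \<epsilon>))\<^sup>2 * (4 * e) * (s1 * s2)))"
      by (rule ennreal_comb) (use S1 S2 H1 H2 E in auto)
    finally show "(\<integral>\<^sup>+\<xi>. X \<xi> * indicator {\<xi>. 2 \<le> \<bar>\<xi>\<bar>} \<xi> \<partial>lborel) \<le> ennreal (3 * ((2 powr (s + \<epsilon>))\<^sup>2 * (h1\<^sup>2 * s2) + (2 powr (s + \<epsilon>))\<^sup>2 * (h2\<^sup>2 * s1) + (2 powr (2 * s + \<epsilon>))\<^sup>2 * (4 * e) * (s1 * s2)))" .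
  qed
  also have "\<dots> = ennreal (16 * 9 powr (s + \<epsilon>) * (s1 * s2)
     + 3 * ((2 powr (s + \<epsilon>))\<^sup>2 * (h1\<^sup>2 * s2) + (2 powr (s + \<epsilon>))\<^sup>2 * (h2\<^sup>2 * s1) + (2 powr (2 * s + \<epsilon>))\<^sup>2 * (4 * e) * (s1 * s2)))"
    using S1 S2 H1 H2 E by (intro ennreal_plus[symmetric]) auto
  finally show ?thesis .
qed

theorem lemma9:
  fixes s \<epsilon> \<rho> lam \<sigma> :: real
  assumes "s > 0" and "0 < \<epsilon>" and "\<epsilon> < min s 1"
    and "\<rho> > 1" and "lam > 1" and "1/2 < \<sigma>" and "\<sigma> < 1"
    and "1 - \<sigma> = 1 / \<rho> + 1 / lam"
    and "\<rho> * (2 * \<sigma> - 1 - \<epsilon>) > 1"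
    and "s < 1 \<Longrightarrow> lam \<le> 2 / (1 - s)"
  shows "\<exists>C. \<forall>f1 f2. in_Hcal lam s f1 \<longrightarrow> in_Hcal lam s f2 \<longrightarrow>
           in_Hcal lam (s + \<epsilon>) (T_sigma \<sigma> f1 f2) \<and>
           Hcal_norm lam (s + \<epsilon>) (T_sigma \<sigma> f1 f2) \<le> C * Hcal_norm lam s f1 * Hcal_norm lam s f2"
proof -
  have s0: "0 \<le> s" and e0: "0 \<le> \<epsilon>" and sg0: "0 \<le> \<sigma>" using assms by auto
  have "0 < \<rho> * (2 * \<sigma> - 1 - \<epsilon>)" using assms(9) by linarith
  then have "0 < 2 * \<sigma> - 1 - \<epsilon>" using assms(4) by (simp add: zero_less_mult_iff)
  then have par4: "1 + \<epsilon> \<le> 2 * \<sigma>" by linarith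
  note par = s0 e0 sg0 par4
  define q where "q = lam / (lam - 1)"
  have q1: "q > 1" unfolding q_def using assms(5) by (simp add: field_simps)
  have pq: "1 / lam + 1 / q = 1" unfolding q_def using assms(5) by (simp add: field_simps)
  have "1 / \<rho> > 0" using assms(4) by simp
  then have "\<sigma> < 1 - 1 / lam" using assms(8) by linarith
  then have "\<sigma> * lam < lam - 1" using assms(5) by (simp add: field_simps)
  then have sq1: "\<sigma> * q < 1" unfolding q_def using assms(5) by (simp add: field_simps)
  define D where "D = (\<integral>\<^sup>+x\<in>{-1<..<1}. ennreal ((\<bar>x\<bar> powr (-\<sigma>)) powr q) \<partial>lborel)"
  have Dle: "D \<le> ennreal (2 / (1 - \<sigma> * q))" unfolding D_def by (rule Dint_bound) (use sg0 q1 sq1 in auto)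
  define d where "d = enn2real D"
  have Dd: "D = ennreal d" unfolding d_def using Dle by (simp add: top.not_eq_extremum le_less_trans[OF Dle])
  have d0: "0 \<le> d" unfolding d_def by simp
  define e where "e = 2 / (2 * (\<sigma> + s) - 1)"
  have e0': "0 \<le> e" unfolding e_def using assms(6) s0 by simp
  have Eb: "(\<integral>\<^sup>+x. (ennreal (g1 (\<sigma> + s) x))\<^sup>2 \<partial>lborel) \<le> ennreal e" unfolding e_def
    by (rule E_bound) (use assms(6) s0 in auto)
  define k1 where "k1 = (2 powr (s + \<epsilon>))\<^sup>2"
  define k2 where "k2 = (2 powr (2 * s + \<epsilon>))\<^sup>2"
  define \<delta> where "\<delta> = (d powr (1 / q))\<^sup>2"
  define K0 where "K0 = 16 * 9 powr (s + \<epsilon>) + 3 * (k1 * \<delta> + k1 * \<delta> + k2 * (4 * e))"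
  have k0: "0 \<le> k1" "0 \<le> k2" "0 \<le> \<delta>" unfolding k1_def k2_def \<delta>_def by auto
  have K00: "0 \<le> K0" unfolding K0_def using k0 e0' by auto
  show ?thesis
  proof (intro exI allI impI conjI)
    fix f1 f2 assume Hf1: "in_Hcal lam s f1" and Hf2: "in_Hcal lam s f2"
    have [measurable]: "f1 \<in> borel_measurable borel" "f2 \<in> borel_measurable borel"
      using Hf1 Hf2 unfolding in_Hcal_def by auto
    define s1 where "s1 = enn2real (sob_int s f1)"
    define s2 where "s2 = enn2real (sob_int s f2)"
    define l1 where "l1 = enn2real (loc_int lam f1)"
    define l2 where "l2 = enn2real (loc_int lam f2)"
    have S1: "sob_int s f1 = ennreal s1" and S2: "sob_int s f2 = ennreal s2"
      using Hf1 Hf2 unfolding in_Hcal_def s1_def s2_def by auto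
    have L1: "loc_int lam f1 = ennreal l1" and L2: "loc_int lam f2 = ennreal l2"
      using Hf1 Hf2 unfolding in_Hcal_def l1_def l2_def by auto
    have nn0: "0 \<le> s1" "0 \<le> s2" "0 \<le> l1" "0 \<le> l2" unfolding s1_def s2_def l1_def l2_def by auto
    define N1 where "N1 = Hcal_norm lam s f1"
    define N2 where "N2 = Hcal_norm lam s f2"
    have N1: "N1 = sqrt s1 + l1 powr (1 / lam)" unfolding N1_def Hcal_norm_def s1_def l1_def ..
    have N2: "N2 = sqrt s2 + l2 powr (1 / lam)" unfolding N2_def Hcal_norm_def s2_def l2_def ..
    define h1 where "h1 = l1 powr (1 / lam) * d powr (1 / q)"
    define h2 where "h2 = l2 powr (1 / lam) * d powr (1 / q)"
    have H1: "(\<integral>\<^sup>+x. ennreal (hA \<sigma> (\<lambda>x. cmod (f1 x)) x) \<partial>lborel) \<le> ennreal h1"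
      unfolding h1_def
      by (rule hA_bound[OF _ _ assms(5) q1 pq _ nn0(3) _ d0]) (use L1 Dd in \<open>auto simp: loc_int_def D_def\<close>)
    have H2: "(\<integral>\<^sup>+x. ennreal (hA \<sigma> (\<lambda>x. cmod (f2 x)) x) \<partial>lborel) \<le> ennreal h2"
      unfolding h2_def
      by (rule hA_bound[OF _ _ assms(5) q1 pq _ nn0(4) _ d0]) (use L2 Dd in \<open>auto simp: loc_int_def D_def\<close>)
    have h0: "0 \<le> h1" "0 \<le> h2" unfolding h1_def h2_def by auto
    define B where "B = 16 * 9 powr (s + \<epsilon>) * (s1 * s2)
     + 3 * ((2 powr (s + \<epsilon>))\<^sup>2 * (h1\<^sup>2 * s2) + (2 powr (s + \<epsilon>))\<^sup>2 * (h2\<^sup>2 * s1) + (2 powr (2 * s + \<epsilon>))\<^sup>2 * (4 * e) * (s1 * s2))"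
    have sobT: "sob_int (s + \<epsilon>) (T_sigma \<sigma> f1 f2) \<le> ennreal B"
      unfolding B_def by (rule sob_main[OF par _ _ S1 nn0(1) S2 nn0(2) H1 h0(1) H2 h0(2) Eb e0']) auto
    have A1: "(\<integral>\<^sup>+x. (ennreal (cmod (f1 x)))\<^sup>2 \<partial>lborel) \<le> ennreal s1" using L2_le_sob[OF s0, of f1] S1 by simp
    have A2: "(\<integral>\<^sup>+x. (ennreal (cmod (f2 x)))\<^sup>2 \<partial>lborel) \<le> ennreal s2" using L2_le_sob[OF s0, of f2] S2 by simp
    have locT: "loc_int lam (T_sigma \<sigma> f1 f2) \<le> ennreal (2 * sqrt (s1 * s2) powr lam)"
      by (rule loc_T[OF _ _ sg0 _ A1 A2]) (use assms(5) nn0 in auto)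
    show "in_Hcal lam (s + \<epsilon>) (T_sigma \<sigma> f1 f2)"
      unfolding in_Hcal_def
    proof (intro conjI)
      show "T_sigma \<sigma> f1 f2 \<in> borel_measurable lborel" using T_measurable[of f1 f2 \<sigma>] by simp
      show "sob_int (s + \<epsilon>) (T_sigma \<sigma> f1 f2) < \<infinity>" using sobT by (simp add: le_less_trans)
      show "loc_int lam (T_sigma \<sigma> f1 f2) < \<infinity>" using locT by (simp add: le_less_trans)
    qed
    have sN1: "sqrt s1 \<le> N1" and sN2: "sqrt s2 \<le> N2" unfolding N1 N2 by auto
    have lN1: "l1 powr (1 / lam) \<le> N1" and lN2: "l2 powr (1 / lam) \<le> N2" unfolding N1 N2 using nn0 by auto
    have N0: "0 \<le> N1" "0 \<le> N2" using sN1 sN2 real_sqrt_ge_zero[OF nn0(1)] real_sqrt_ge_zero[OF nn0(2)] by linarith+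
    have s1N: "s1 \<le> N1\<^sup>2" using sN1 nn0 by (metis real_sqrt_le_iff real_sqrt_unique sqrt_le_D)
    have s2N: "s2 \<le> N2\<^sup>2" using sN2 nn0 by (metis real_sqrt_le_iff real_sqrt_unique sqrt_le_D)
    have h1N: "h1\<^sup>2 \<le> N1\<^sup>2 * \<delta>"
    proof -
      have "h1 \<le> N1 * d powr (1 / q)" unfolding h1_def using lN1 by (intro mult_right_mono) auto
      then have "h1\<^sup>2 \<le> (N1 * d powr (1 / q))\<^sup>2" using h0 by (intro power_mono) auto
      then show ?thesis unfolding \<delta>_def by (simp add: power_mult_distrib)
    qed
    have h2N: "h2\<^sup>2 \<le> N2\<^sup>2 * \<delta>"
    proof -
      have "h2 \<le> N2 * d powr (1 / q)" unfolding h2_def using lN2 by (intro mult_right_mono) auto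
      then have "h2\<^sup>2 \<le> (N2 * d powr (1 / q))\<^sup>2" using h0 by (intro power_mono) auto
      then show ?thesis unfolding \<delta>_def by (simp add: power_mult_distrib)
    qed
    have ss: "s1 * s2 \<le> N1\<^sup>2 * N2\<^sup>2" using s1N s2N nn0 by (intro mult_mono) auto
    have t1: "k1 * (h1\<^sup>2 * s2) \<le> k1 * \<delta> * (N1\<^sup>2 * N2\<^sup>2)"
    proof -
      have "h1\<^sup>2 * s2 \<le> (N1\<^sup>2 * \<delta>) * N2\<^sup>2" using h1N s2N nn0 k0 by (intro mult_mono) auto
      then have "k1 * (h1\<^sup>2 * s2) \<le> k1 * ((N1\<^sup>2 * \<delta>) * N2\<^sup>2)" by (rule mult_left_mono[OF _ k0(1)])
      also have "k1 * ((N1\<^sup>2 * \<delta>) * N2\<^sup>2) = k1 * \<delta> * (N1\<^sup>2 * N2\<^sup>2)" by (simp add: mult_ac)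
      finally show ?thesis .
    qed
    have t2: "k1 * (h2\<^sup>2 * s1) \<le> k1 * \<delta> * (N1\<^sup>2 * N2\<^sup>2)"
    proof -
      have "h2\<^sup>2 * s1 \<le> (N2\<^sup>2 * \<delta>) * N1\<^sup>2" using h2N s1N nn0 k0 by (intro mult_mono) auto
      then have "k1 * (h2\<^sup>2 * s1) \<le> k1 * ((N2\<^sup>2 * \<delta>) * N1\<^sup>2)" by (rule mult_left_mono[OF _ k0(1)])
      also have "k1 * ((N2\<^sup>2 * \<delta>) * N1\<^sup>2) = k1 * \<delta> * (N1\<^sup>2 * N2\<^sup>2)" by (simp add: mult_ac)
      finally show ?thesis .
    qed
    have t0: "16 * 9 powr (s + \<epsilon>) * (s1 * s2) \<le> 16 * 9 powr (s + \<epsilon>) * (N1\<^sup>2 * N2\<^sup>2)"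
      using ss by (intro mult_left_mono) auto
    have t3: "k2 * (4 * e) * (s1 * s2) \<le> k2 * (4 * e) * (N1\<^sup>2 * N2\<^sup>2)"
      using ss k0 e0' by (intro mult_left_mono) auto
    have BK: "B \<le> K0 * (N1 * N2)\<^sup>2"
    proof -
      have "B \<le> 16 * 9 powr (s + \<epsilon>) * (N1\<^sup>2 * N2\<^sup>2) + 3 * (k1 * \<delta> * (N1\<^sup>2 * N2\<^sup>2) + k1 * \<delta> * (N1\<^sup>2 * N2\<^sup>2) + k2 * (4 * e) * (N1\<^sup>2 * N2\<^sup>2))"
        unfolding B_def k1_def[symmetric] k2_def[symmetric] by (rule add_mono[OF t0 mult_left_mono[OF add_mono[OF add_mono[OF t1 t2] t3]]]) simp
      also have "\<dots> = K0 * (N1 * N2)\<^sup>2" unfolding K0_def by (simp add: power_mult_distrib algebra_simps)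
      finally show ?thesis .
    qed
    have B0: "0 \<le> B" unfolding B_def using nn0 h0 e0' by auto
    have part1: "sqrt (enn2real (sob_int (s + \<epsilon>) (T_sigma \<sigma> f1 f2))) \<le> sqrt K0 * (N1 * N2)"
    proof -
      have "enn2real (sob_int (s + \<epsilon>) (T_sigma \<sigma> f1 f2)) \<le> B" by (rule enn2real_leI[OF B0 sobT])
      also have "\<dots> \<le> K0 * (N1 * N2)\<^sup>2" by (rule BK)
      finally have "sqrt (enn2real (sob_int (s + \<epsilon>) (T_sigma \<sigma> f1 f2))) \<le> sqrt (K0 * (N1 * N2)\<^sup>2)" by simp
      also have "\<dots> = sqrt K0 * (N1 * N2)" using N0 by (simp add: real_sqrt_mult)
      finally show ?thesis .
    qed
    have part2: "enn2real (loc_int lam (T_sigma \<sigma> f1 f2)) powr (1 / lam) \<le> 2 * (N1 * N2)"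
    proof -
      define Y where "Y = sqrt (s1 * s2)"
      have Y0: "0 \<le> Y" unfolding Y_def using nn0 by simp
      have "enn2real (loc_int lam (T_sigma \<sigma> f1 f2)) \<le> 2 * Y powr lam" unfolding Y_def
        by (rule enn2real_leI[OF _ locT]) simp
      then have "enn2real (loc_int lam (T_sigma \<sigma> f1 f2)) powr (1 / lam) \<le> (2 * Y powr lam) powr (1 / lam)"
        using assms(5) by (intro powr_mono2) auto
      also have "\<dots> = 2 powr (1 / lam) * Y" using Y0 assms(5) by (simp add: powr_mult powr_powr)
      also have "\<dots> \<le> 2 * Y"
      proof (rule mult_right_mono)
        show "2 powr (1 / lam) \<le> 2" using assms(5) powr_mono[of "1 / lam" 1 2] by simp
      qed (rule Y0)
      also have "Y \<le> N1 * N2" unfolding Y_def using mult_mono[OF sN1 sN2 N0(1) real_sqrt_ge_zero[OF nn0(2)]] by (simp add: real_sqrt_mult)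
      finally show ?thesis by simp
    qed
    show "Hcal_norm lam (s + \<epsilon>) (T_sigma \<sigma> f1 f2) \<le> (sqrt K0 + 2) * Hcal_norm lam s f1 * Hcal_norm lam s f2"
      unfolding Hcal_norm_def[of lam "s + \<epsilon>"] N1_def[symmetric] N2_def[symmetric]
      using part1 part2 by (simp add: algebra_simps)
  qed
qed

end
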